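(* Let $\Omega=(0,1)$, $a\in L^\infty(\Omega)$ with $0<\alpha\le a(x)\le\beta$, and let $u\in H^1(\Omega)$ be the solution of the variational problem $B(u,v)=F(v)$ for the model problem $-(au')'=f$ on $\Omega$, where it is a priori known that $u(0)=0$. Let the uniform mesh, hat functions $N_i$, patches $\omega_i$, patch interpolants $I_{\omega_i}$, spaces $\overline{V}_i$ and sets $\mathcal{T}_1,\mathcal{T}_2$ be as in the context. Suppose that for each $x_i\in\mathcal{T}_2$ there exist $\bar{\xi}^i\in\overline{V}_i$, $\epsilon_i\ge 0$, and a constant $C_1>0$ independent of $i$, such that \[ \|u-I_{\omega_i}u-\bar{\xi}^i\|_{L^2(\omega_i)}\le C_1\,\mathrm{diam}(\omega_i)\,\|u-I_{\omega_i}u-\bar{\xi}^i\|_{\mathcal{E}(\omega_i)} \quad\text{and}\quad \|u-I_{\omega_i}u-\bar{\xi}^i\|_{\mathcal{E}(\omega_i)}\le\epsilon_i . \] Then there exists $v\in\mathcal{S}=\mathcal{S}_1+\overline{\mathcal{S}}_2$ such that \[ \|u-v\|_{\mathcal{E}(\Omega)}\le C\Big\{\sum_{x_i\in\mathcal{T}\setminus\mathcal{T}_2}\|u-I_{\omega_i}u\|^2_{\mathcal{E}(\omega_i)}+\sum_{x_i\in\mathcal{T}_2}\epsilon_i^2\Big\}^{1/2}, \] where $C$ is a constant independent of $h$ and of the $\epsilon_i$.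
   Context: Energy norm: for an open set $\omega\subset\Omega$, $\|v\|_{\mathcal{E}(\omega)}=\big(\int_\omega a|v'|^2\,dx\big)^{1/2}$; $B(u,v)=\int_\Omega a u'v'\,dx$. Mesh: $h=1/N$, vertices $x_k=kh$, $k=0,\dots,N$, set of vertices $\mathcal{T}=\{x_0,\dots,x_N\}$, elements $\tau_k=[x_{k-1},x_k]$, $k=1,\dots,N$. $N_i$ is the continuous piecewise linear hat function with $N_i(x_j)=\delta_{ij}$ (so $\{N_i\}$ is a partition of unity); the patch is $\omega_i=(x_{i-1},x_{i+1})$ for $1\le i\le N-1$, $\omega_0=(x_0,x_1)$, $\omega_N=(x_{N-1},x_N)$; the vertices of $\omega_i$ are $x_{i-1},x_i,x_{i+1}$ (resp. $x_0,x_1$ and $x_{N-1},x_N$). For $w\in H^1(\omega_i)$, $I_{\omega_i}w=\sum_k w(x_k)N_k|_{\omega_i}$, the sum over the vertices $x_k$ of $\omega_i$ (piecewise linear interpolant on the patch). For each $x_i\in\mathcal{T}$ a local space $V_i=\mathrm{span}\{\phi^i_j\}_{j=0}^{n_i}\subset H^1(\omega_i)$ is given, and $\overline{V}_i=\mathrm{span}\{\bar\phi^i_j\}_{j=1}^{n_i}$ with $\bar\phi^i_j=\phi^i_j-I_{\omega_i}\phi^i_j$. $\mathcal{T}_1=\{x_i:1\le i\le N\}$, $\mathcal{T}_2=\{x_i\in\mathcal{T}:\overline{V}_i\neq\{0\}\}$. $\mathcal{S}_1=\{\sum_{x_i\in\mathcal{T}_1}a_iN_i: a_i\in\mathbb{R}\}$,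 $\overline{\mathcal{S}}_2=\{\sum_{x_i\in\mathcal{T}_2}N_i\bar\xi^i:\bar\xi^i\in\overline{V}_i\}$ (each $N_i\bar\xi^i$ extended by zero outside $\omega_i$). *)

theory Defs
  imports "HOL-Analysis.Analysis"
begin

text \<open>w is in H^1 on the interval (c,d) with weak derivative w' (continuous representative):
  w' is square integrable and w is the indefinite integral of w'.\<close>
definition H1_on :: "real \<Rightarrow> real \<Rightarrow> (real \<Rightarrow> real) \<Rightarrow> (real \<Rightarrow> real) \<Rightarrow> bool" where
  "H1_on c d w w' \<longleftrightarrow> c < d \<and> w' absolutely_integrable_on {c..d}
     \<and> (\<lambda>x. (w' x)^2) integrable_on {c..d}
     \<and> (\<forall>x\<in>{c..d}. w x = w c + integral {c..x} w')"

definition wderiv :: "real \<Rightarrow> real \<Rightarrow> (real \<Rightarrow> real) \<Rightarrow> real \<Rightarrow> real" where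
  "wderiv c d w = (SOME g. H1_on c d w g)"

definition energy_norm :: "(real \<Rightarrow> real) \<Rightarrow> real \<Rightarrow> real \<Rightarrow> (real \<Rightarrow> real) \<Rightarrow> real" where
  "energy_norm a c d w = sqrt (integral {c..d} (\<lambda>x. a x * (wderiv c d w x)^2))"

definition L2_norm :: "real \<Rightarrow> real \<Rightarrow> (real \<Rightarrow> real) \<Rightarrow> real" where
  "L2_norm c d w = sqrt (integral {c..d} (\<lambda>x. (w x)^2))"

definition node :: "nat \<Rightarrow> nat \<Rightarrow> real" where
  "node N k = real k / real N"

definition hat :: "nat \<Rightarrow> nat \<Rightarrow> real \<Rightarrow> real" where
  "hat N k x = max 0 (1 - \<bar>real N * x - real k\<bar>)"

definition patch_l :: "nat \<Rightarrow> nat \<Rightarrow> real" where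
  "patch_l N i = (if i = 0 then 0 else node N (i - 1))"

definition patch_r :: "nat \<Rightarrow> nat \<Rightarrow> real" where
  "patch_r N i = (if i = N then 1 else node N (i + 1))"

definition patch_vertices :: "nat \<Rightarrow> nat \<Rightarrow> nat set" where
  "patch_vertices N i = {k. k \<le> N \<and> i \<le> k + 1 \<and> k \<le> i + 1}"

definition patch_interp :: "nat \<Rightarrow> nat \<Rightarrow> (real \<Rightarrow> real) \<Rightarrow> real \<Rightarrow> real" where
  "patch_interp N i w x = (\<Sum>k\<in>patch_vertices N i. w (node N k) * hat N k x)"

text \<open>overline V_i = span of phi^i_j - I_{omega_i} phi^i_j, j = 1..n_i, as functions on omega_i
  (values outside the patch are irrelevant).\<close>
definition Vbar :: "nat \<Rightarrow> (nat \<Rightarrow> nat \<Rightarrow> real \<Rightarrow> real) \<Rightarrow> (nat \<Rightarrow> nat) \<Rightarrow> nat \<Rightarrow> (real \<Rightarrow> real) set" where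
  "Vbar N \<phi> n i = {\<xi>. \<exists>c::nat \<Rightarrow> real. \<forall>x\<in>{patch_l N i..patch_r N i}.
      \<xi> x = (\<Sum>j\<in>{1..n i}. c j * (\<phi> i j x - patch_interp N i (\<phi> i j) x))}"

definition T2 :: "nat \<Rightarrow> (nat \<Rightarrow> nat \<Rightarrow> real \<Rightarrow> real) \<Rightarrow> (nat \<Rightarrow> nat) \<Rightarrow> nat set" where
  "T2 N \<phi> n = {i. i \<le> N \<and> (\<exists>\<xi>\<in>Vbar N \<phi> n i. \<exists>x\<in>{patch_l N i<..<patch_r N i}. \<xi> x \<noteq> 0)}"

definition in_S :: "nat \<Rightarrow> (nat \<Rightarrow> nat \<Rightarrow> real \<Rightarrow> real) \<Rightarrow> (nat \<Rightarrow> nat) \<Rightarrow> (real \<Rightarrow> real) \<Rightarrow> bool" where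
  "in_S N \<phi> n v \<longleftrightarrow> (\<exists>(b::nat \<Rightarrow> real) (\<xi>::nat \<Rightarrow> real \<Rightarrow> real).
      (\<forall>i\<in>T2 N \<phi> n. \<xi> i \<in> Vbar N \<phi> n i) \<and>
      (\<forall>x\<in>{0..1}. v x = (\<Sum>i\<in>{1..N}. b i * hat N i x) + (\<Sum>i\<in>T2 N \<phi> n. hat N i x * \<xi> i x)))"

end

theory Submission
  imports Defs
begin
lemma hk_combine:
  fixes f :: "real \<Rightarrow> real"
  shows "a \<le> c \<Longrightarrow> c \<le> b \<Longrightarrow> f integrable_on {a..b} \<Longrightarrow> integral {a..c} f + integral {c..b} f = integral {a..b} f"
  by (rule Henstock_Kurzweil_Integration.integral_combine)

lemma zero_ae:
  fixes h :: "real \<Rightarrow> real"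
  assumes h: "h absolutely_integrable_on {c..d}" and z: "\<forall>x\<in>{c..d}. integral {c..x} h = 0"
  shows "negligible {x\<in>{c..d}. h x \<noteq> 0}"
proof -
  define H where "H = (\<lambda>x. indicator {c..d} x * h x)"
  have intH: "integrable lebesgue H"
    using h unfolding set_integrable_def H_def by simp
  then have "H \<in> borel_measurable lebesgue" by auto
  then obtain H' where H'b: "H' \<in> borel_measurable lborel" and ae: "AE x in lborel. H x = H' x"
    using completion_ex_borel_measurable_real by blast
  have aeL: "AE x in lebesgue. H x = H' x"
    using ae by (simp add: AE_completion)
  have H'L: "H' \<in> borel_measurable lebesgue" using H'b by (rule measurable_completion)
  have HL: "H \<in> borel_measurable lebesgue" using intH by auto
  have intH'L: "integrable lebesgue H'"
  proof -
    show ?thesis using integrable_cong_AE[OF HL H'L aeL] intH by simp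
  qed
  have intH': "integrable lborel H'"
    using intH'L H'b by (simp add: integrable_completion)
  have key: "(\<integral>y. H' y * indicator {x<..} y \<partial>lborel) = 0" for x
  proof -
    have "(\<integral>y. H' y * indicator {x<..} y \<partial>lborel) = (\<integral>y. H' y * indicator {x<..} y \<partial>lebesgue)"
      by (rule integral_completion[symmetric]) (use H'b in auto)
    also have "\<dots> = (\<integral>y. H y * indicator {x<..} y \<partial>lebesgue)"
      using aeL by (intro integral_cong_AE borel_measurable_times H'L HL borel_measurable_indicator) auto
    also have "\<dots> = (LINT y:({c..d} \<inter> {x<..})|lebesgue. h y)"
      unfolding set_lebesgue_integral_def H_def
      by (intro Bochner_Integration.integral_cong) (auto simp: indicator_def)
    also have "\<dots> = integral ({c..d} \<inter> {x<..}) h"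
    proof (rule set_lebesgue_integral_eq_integral)
      show "set_integrable lebesgue ({c..d} \<inter> {x<..}) h"
        using h by (rule set_integrable_subset) auto
    qed
    also have "\<dots> = 0"
    proof (cases "x < c")
      case True
      then have "{c..d} \<inter> {x<..} = {c..d}" by auto
      then show ?thesis using z by (cases "c \<le> d") auto
    next
      case False
      show ?thesis
      proof (cases "x < d")
        case True
        with False have eq: "{c..d} \<inter> {x<..} = {x<..d}" by auto
        have hi: "h integrable_on {c..d}" using h by (simp add: absolutely_integrable_on_def)
        have "integral {x<..d} h = integral {x..d} h"
          by (rule integral_spike_set) (auto intro: negligible_subset[of "{x}"])
        also have "\<dots> = integral {c..d} h - integral {c..x} h"
          using hk_combine[where a=c and c=x and b=d and f=h] hi False True by auto
        also have "\<dots> = 0" using z False True by auto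
        finally show ?thesis using eq by simp
      next
        case False
        then have "{c..d} \<inter> {x<..} = {}" by auto
        then show ?thesis by simp
      qed
    qed
    finally show ?thesis .
  qed
  define M1 where "M1 = density lborel (\<lambda>y. ennreal (H' y))"
  define M2 where "M2 = density lborel (\<lambda>y. ennreal (- H' y))"
  have pos: "integrable lborel (\<lambda>y. max 0 (H' y) * indicator {x<..} y)" for x
    using intH' by (intro integrable_real_mult_indicator integrable_max) auto
  have neg: "integrable lborel (\<lambda>y. max 0 (- H' y) * indicator {x<..} y)" for x
    using intH' by (intro integrable_real_mult_indicator integrable_max) auto
  have em1: "emeasure M1 {x<..} = ennreal (\<integral>y. max 0 (H' y) * indicator {x<..} y \<partial>lborel)" for x
  proof -
    have "emeasure M1 {x<..} = (\<integral>\<^sup>+ y. ennreal (H' y) * indicator {x<..} y \<partial>lborel)"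
      unfolding M1_def using H'b by (subst emeasure_density) auto
    also have "\<dots> = (\<integral>\<^sup>+ y. ennreal (max 0 (H' y) * indicator {x<..} y) \<partial>lborel)"
      by (intro nn_integral_cong) (auto simp: indicator_def ennreal_max_0)
    also have "\<dots> = ennreal (\<integral>y. max 0 (H' y) * indicator {x<..} y \<partial>lborel)"
      using pos by (intro nn_integral_eq_integral) auto
    finally show ?thesis .
  qed
  have em2: "emeasure M2 {x<..} = ennreal (\<integral>y. max 0 (- H' y) * indicator {x<..} y \<partial>lborel)" for x
  proof -
    have "emeasure M2 {x<..} = (\<integral>\<^sup>+ y. ennreal (- H' y) * indicator {x<..} y \<partial>lborel)"
      unfolding M2_def using H'b by (subst emeasure_density) auto
    also have "\<dots> = (\<integral>\<^sup>+ y. ennreal (max 0 (- H' y) * indicator {x<..} y) \<partial>lborel)"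
      by (intro nn_integral_cong) (auto simp: indicator_def ennreal_max_0)
    also have "\<dots> = ennreal (\<integral>y. max 0 (- H' y) * indicator {x<..} y \<partial>lborel)"
      using neg by (intro nn_integral_eq_integral) auto
    finally show ?thesis .
  qed
  have eqint: "(\<integral>y. max 0 (H' y) * indicator {x<..} y \<partial>lborel) = (\<integral>y. max 0 (- H' y) * indicator {x<..} y \<partial>lborel)" for x
  proof -
    have "(\<integral>y. max 0 (H' y) * indicator {x<..} y \<partial>lborel) - (\<integral>y. max 0 (- H' y) * indicator {x<..} y \<partial>lborel)
        = (\<integral>y. max 0 (H' y) * indicator {x<..} y - max 0 (- H' y) * indicator {x<..} y \<partial>lborel)"
      using pos neg by (rule Bochner_Integration.integral_diff[symmetric])
    also have "\<dots> = (\<integral>y. H' y * indicator {x<..} y \<partial>lborel)"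
      by (intro Bochner_Integration.integral_cong) (auto simp: indicator_def)
    finally show ?thesis using key by simp
  qed
  have "M1 = M2"
  proof (rule measure_eqI_lessThan)
    show "sets M1 = sets borel" "sets M2 = sets borel" unfolding M1_def M2_def by auto
    show "emeasure M1 {x<..} < \<infinity>" for x using em1 by simp
    show "emeasure M1 {x<..} = emeasure M2 {x<..}" for x using em1 em2 eqint by simp
  qed
  then have "AE y in lborel. ennreal (H' y) = ennreal (- H' y)"
    unfolding M1_def M2_def using H'b by (subst (asm) sigma_finite_measure.density_unique_iff[OF sigma_finite_lborel]) auto
  then have "AE y in lborel. H' y = 0"
  proof eventually_elim
    case (elim y)
    then show ?case
      using ennreal_eq_0_iff[of "H' y"] ennreal_eq_0_iff[of "- H' y"] by (cases "H' y \<ge> 0") auto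
  qed
  with ae have "AE y in lborel. H y = 0" by eventually_elim simp
  then have "AE y in lebesgue. H y = 0" by (simp add: AE_completion)
  then obtain Nn where Nn: "Nn \<in> null_sets lebesgue" "{y \<in> space lebesgue. \<not> H y = 0} \<subseteq> Nn"
    by (elim AE_E) blast
  have "{x\<in>{c..d}. h x \<noteq> 0} \<subseteq> Nn" using Nn(2) by (auto simp: H_def)
  moreover have "negligible Nn" using Nn(1) by (simp add: negligible_iff_null_sets)
  ultimately show ?thesis using negligible_subset by blast
qed

lemma hk_icombine:
  fixes f :: "real \<Rightarrow> real"
  shows "p \<le> q \<Longrightarrow> q \<le> r \<Longrightarrow> f integrable_on {p..q} \<Longrightarrow> f integrable_on {q..r} \<Longrightarrow> f integrable_on {p..r}"
  by (rule Henstock_Kurzweil_Integration.integrable_combine)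

definition L2on :: "real \<Rightarrow> real \<Rightarrow> (real \<Rightarrow> real) \<Rightarrow> bool" where
  "L2on c d g \<longleftrightarrow> g \<in> borel_measurable (lebesgue_on {c..d}) \<and> (\<lambda>x. (g x)^2) integrable_on {c..d}"

lemma L2on_absint:
  assumes "L2on c d g" shows "g absolutely_integrable_on {c..d}"
proof (rule measurable_bounded_by_integrable_imp_absolutely_integrable)
  show "g \<in> borel_measurable (lebesgue_on {c..d})" using assms by (simp add: L2on_def)
  show "{c..d} \<in> sets lebesgue" by simp
  show "(\<lambda>x. 1 + (g x)^2) integrable_on {c..d}"
    using assms by (intro integrable_add) (auto simp: L2on_def)
  show "norm (g x) \<le> 1 + (g x)^2" for x
  proof -
    have e: "(\<bar>g x\<bar> - 1)^2 = (g x)^2 - 2*\<bar>g x\<bar> + 1"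
      by (simp add: power2_eq_square algebra_simps)
    have "0 \<le> (\<bar>g x\<bar> - 1)^2" by simp
    then have "\<bar>g x\<bar> \<le> 1 + (g x)^2" using e by (smt (verit) zero_le_power2)
    then show ?thesis by simp
  qed
qed

lemma L2on_int: "L2on c d g \<Longrightarrow> g integrable_on {c..d}"
  using L2on_absint set_lebesgue_integral_eq_integral(1) by blast

lemma L2on_add:
  assumes f: "L2on c d f" and g: "L2on c d g"
  shows "L2on c d (\<lambda>x. f x + g x)"
  unfolding L2on_def
proof
  have mf: "f \<in> borel_measurable (lebesgue_on {c..d})" and mg: "g \<in> borel_measurable (lebesgue_on {c..d})"
    using f g by (auto simp: L2on_def)
  then show m: "(\<lambda>x. f x + g x) \<in> borel_measurable (lebesgue_on {c..d})" by measurable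
  have "(\<lambda>x. (f x + g x)^2) absolutely_integrable_on {c..d}"
  proof (rule measurable_bounded_by_integrable_imp_absolutely_integrable)
    show "(\<lambda>x. (f x + g x)^2) \<in> borel_measurable (lebesgue_on {c..d})" using m by measurable
    show "{c..d} \<in> sets lebesgue" by simp
    show "(\<lambda>x. 2 * (f x)^2 + 2 * (g x)^2) integrable_on {c..d}"
      using f g by (intro integrable_add integrable_on_mult_right) (auto simp: L2on_def)
    show "norm ((f x + g x)^2) \<le> 2 * (f x)^2 + 2 * (g x)^2" for x
    proof -
      have e: "(f x + g x)^2 = 2*(f x)^2 + 2*(g x)^2 - (f x - g x)^2" by (simp add: power2_eq_square algebra_simps)
      have "0 \<le> (f x - g x)^2" by simp
      moreover have "norm ((f x + g x)^2) = (f x + g x)^2" by simp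
      ultimately show ?thesis using e by linarith
    qed
  qed
  then show "(\<lambda>x. (f x + g x)^2) integrable_on {c..d}"
    using set_lebesgue_integral_eq_integral(1) by blast
qed

lemma L2on_mult_bounded:
  assumes f: "f \<in> borel_measurable (lebesgue_on {c..d})" and B: "\<And>x. x \<in> {c..d} \<Longrightarrow> \<bar>f x\<bar> \<le> B"
    and g: "L2on c d g"
  shows "L2on c d (\<lambda>x. f x * g x)"
  unfolding L2on_def
proof
  have mg: "g \<in> borel_measurable (lebesgue_on {c..d})" using g by (simp add: L2on_def)
  show m: "(\<lambda>x. f x * g x) \<in> borel_measurable (lebesgue_on {c..d})" using f mg by measurable
  have "(\<lambda>x. (f x * g x)^2) absolutely_integrable_on {c..d}"
  proof (rule measurable_bounded_by_integrable_imp_absolutely_integrable)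
    show "(\<lambda>x. (f x * g x)^2) \<in> borel_measurable (lebesgue_on {c..d})" using m by measurable
    show "{c..d} \<in> sets lebesgue" by simp
    show "(\<lambda>x. B^2 * (g x)^2) integrable_on {c..d}"
      using g by (intro integrable_on_mult_right) (auto simp: L2on_def)
    show "norm ((f x * g x)^2) \<le> B^2 * (g x)^2" if "x \<in> {c..d}" for x
    proof -
      have "\<bar>f x\<bar>^2 \<le> B^2" by (rule power_mono) (use B[OF that] in auto)
      then have "(f x)^2 \<le> B^2" by simp
      then show ?thesis by (simp add: power_mult_distrib mult_right_mono)
    qed
  qed
  then show "(\<lambda>x. (f x * g x)^2) integrable_on {c..d}"
    using set_lebesgue_integral_eq_integral(1) by blast
qed

lemma L2on_cont:
  assumes "continuous_on {c..d} f" shows "L2on c d f"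
  unfolding L2on_def
proof
  show "f \<in> borel_measurable (lebesgue_on {c..d})"
    using assms by (rule continuous_imp_measurable_on_sets_lebesgue) simp
  have "continuous_on {c..d} (\<lambda>x. (f x)^2)" using assms by (intro continuous_intros)
  then show "(\<lambda>x. (f x)^2) integrable_on {c..d}" by (rule integrable_continuous_interval)
qed

lemma L2on_cmult: "L2on c d g \<Longrightarrow> L2on c d (\<lambda>x. k * g x)"
  by (rule L2on_mult_bounded[where B="\<bar>k\<bar>"]) auto

lemma L2on_diff: "L2on c d f \<Longrightarrow> L2on c d g \<Longrightarrow> L2on c d (\<lambda>x. f x - g x)"
  using L2on_add[of c d f "\<lambda>x. (-1) * g x"] L2on_cmult[of c d g "-1"] by simp

lemma L2on_sum: "finite J \<Longrightarrow> (\<And>j. j \<in> J \<Longrightarrow> L2on c d (g j)) \<Longrightarrow> L2on c d (\<lambda>x. \<Sum>j\<in>J. g j x)"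
proof (induction J rule: finite_induct)
  case empty
  then show ?case using L2on_cont[of c d "\<lambda>x. 0"] by simp
next
  case (insert j J)
  have "L2on c d (\<lambda>x. g j x + (\<Sum>j\<in>J. g j x))"
    by (rule L2on_add) (use insert.prems insert.IH in auto)
  then show ?case by (simp only: sum.insert[OF insert.hyps])
qed

lemma L2on_sub: "L2on c d g \<Longrightarrow> c \<le> c' \<Longrightarrow> d' \<le> d \<Longrightarrow> L2on c' d' g"
  unfolding L2on_def
proof (intro conjI)
  assume h: "g \<in> borel_measurable (lebesgue_on {c..d}) \<and> (\<lambda>x. (g x)\<^sup>2) integrable_on {c..d}" "c \<le> c'" "d' \<le> d"
  then show "g \<in> borel_measurable (lebesgue_on {c'..d'})"
    using measurable_restrict_mono[of g lebesgue "{c..d}" borel "{c'..d'}"] h by auto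
  show "(\<lambda>x. (g x)\<^sup>2) integrable_on {c'..d'}"
    by (rule integrable_subinterval_real[of _ c d]) (use \<open>c \<le> c'\<close> \<open>d' \<le> d\<close> h in auto)
qed

lemma H1_L2: assumes "H1_on c d w g" shows "L2on c d g"
proof -
  have a: "g absolutely_integrable_on {c..d}" and s: "(\<lambda>x. (g x)^2) integrable_on {c..d}"
    using assms by (auto simp: H1_on_def)
  have "g integrable_on {c..d}" using a set_lebesgue_integral_eq_integral(1) by blast
  then show ?thesis using s integrable_imp_measurable unfolding L2on_def by blast
qed

lemma H1_onI:
  assumes "c < d" "L2on c d g" "\<And>x. x \<in> {c..d} \<Longrightarrow> w x = w c + integral {c..x} g"
  shows "H1_on c d w g"
  using assms L2on_absint[OF assms(2)] assms(2) unfolding H1_on_def L2on_def by blast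

lemma H1_lt: "H1_on c d w g \<Longrightarrow> c < d" unfolding H1_on_def by blast

lemma H1_eq: "H1_on c d w g \<Longrightarrow> x \<in> {c..d} \<Longrightarrow> w x = w c + integral {c..x} g"
  unfolding H1_on_def by blast

lemma H1_iff: "H1_on c d w g \<longleftrightarrow> c < d \<and> L2on c d g \<and> (\<forall>x\<in>{c..d}. w x = w c + integral {c..x} g)"
  using H1_lt H1_eq H1_L2 H1_onI by metis

lemma H1_int: "H1_on c d w g \<Longrightarrow> g integrable_on {c..d}"
  using H1_L2 L2on_int by blast

lemma H1_cont: assumes "H1_on c d w g" shows "continuous_on {c..d} w"
proof -
  have "continuous_on {c..d} (\<lambda>x. w c + integral {c..x} g)"
    by (rule continuous_on_add[OF continuous_on_const indefinite_integral_continuous_1[OF H1_int[OF assms]]])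
  then show ?thesis
    by (rule continuous_on_eq) (rule H1_eq[OF assms, symmetric])
qed

lemma H1_restrict:
  assumes H: "H1_on c d w g" and "c \<le> c'" "c' < d'" "d' \<le> d"
  shows "H1_on c' d' w g"
proof (rule H1_onI)
  show "c' < d'" by fact
  show "L2on c' d' g" by (rule L2on_sub[OF H1_L2[OF H]]) (use assms in auto)
  fix x assume x: "x \<in> {c'..d'}"
  have gi: "g integrable_on {c..x}"
    by (rule integrable_subinterval_real[OF H1_int[OF H]]) (use x assms in auto)
  have e1: "w x = w c + integral {c..x} g" by (rule H1_eq[OF H]) (use x assms in auto)
  have e2: "integral {c..x} g = integral {c..c'} g + integral {c'..x} g"
    using hk_combine[of c c' x g] gi x assms by auto
  have e3: "w c' = w c + integral {c..c'} g" by (rule H1_eq[OF H, of c']) (use assms in auto)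
  show "w x = w c' + integral {c'..x} g" using e1 e2 e3 by simp
qed

lemma H1_glue:
  assumes H1: "H1_on c m w g" and H2: "H1_on m d w g"
  shows "H1_on c d w g"
proof (rule H1_onI)
  have cm: "c < m" and md: "m < d" using H1_lt H1 H2 by auto
  then show "c < d" by simp
  have L1: "L2on c m g" and L2: "L2on m d g" using H1_L2 H1 H2 by auto
  show "L2on c d g" unfolding L2on_def
  proof
    have "g absolutely_integrable_on {c..d}"
      using absolutely_integrable_on_combine[OF L2on_absint[OF L1] L2on_absint[OF L2]] cm md by simp
    then show "g \<in> borel_measurable (lebesgue_on {c..d})"
      by (simp add: absolutely_integrable_measurable)
    show "(\<lambda>x. (g x)^2) integrable_on {c..d}"
      using hk_icombine[of c m d "\<lambda>x. (g x)^2"] L1 L2 cm md by (auto simp: L2on_def)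
  qed
  fix x assume x: "x \<in> {c..d}"
  show "w x = w c + integral {c..x} g"
  proof (cases "x \<le> m")
    case True then show ?thesis by (intro H1_eq[OF H1]) (use x in auto)
  next
    case False
    have gi: "g integrable_on {c..x}"
      using hk_icombine[of c m x g] L2on_int[OF L1] L2on_int[OF L2on_sub[OF L2, of m x]] False cm x by auto
    have e1: "w x = w m + integral {m..x} g" by (intro H1_eq[OF H2]) (use x False in auto)
    have e2: "w m = w c + integral {c..m} g" by (intro H1_eq[OF H1]) (use cm in auto)
    have e3: "integral {c..m} g + integral {m..x} g = integral {c..x} g"
      using hk_combine[of c m x g] gi False cm by auto
    show ?thesis using e1 e2 e3 by simp
  qed
qed

lemma L2on_spike:
  assumes H: "L2on c d g" and S: "negligible S" and eq: "\<And>x. x \<in> {c..d} - S \<Longrightarrow> g' x = g x"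
  shows "L2on c d g'"
proof -
  have "g' absolutely_integrable_on {c..d}"
    by (rule absolutely_integrable_spike[OF L2on_absint[OF H] S eq])
  then have "g' integrable_on {c..d}" using set_lebesgue_integral_eq_integral(1) by blast
  then have "g' \<in> borel_measurable (lebesgue_on {c..d})" by (rule integrable_imp_measurable)
  moreover have "(\<lambda>x. (g' x)\<^sup>2) integrable_on {c..d}"
  proof (rule integrable_spike[OF _ S])
    show "(\<lambda>x. (g x)\<^sup>2) integrable_on {c..d}" using H unfolding L2on_def by blast
    show "(g' x)\<^sup>2 = (g x)\<^sup>2" if "x \<in> {c..d} - S" for x using eq[OF that] by simp
  qed
  ultimately show ?thesis unfolding L2on_def by blast
qed

lemma H1_spike:
  assumes H: "H1_on c d w g" and S: "negligible S" and eq: "\<And>x. x \<in> {c..d} - S \<Longrightarrow> g' x = g x"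
  shows "H1_on c d w g'"
proof (rule H1_onI)
  show "c < d" using H1_lt[OF H] .
  show "L2on c d g'" using L2on_spike[OF H1_L2[OF H] S eq] .
  fix x assume x: "x \<in> {c..d}"
  have "integral {c..x} g' = integral {c..x} g"
    by (rule integral_spike[OF S]) (use eq x in auto)
  then show "w x = w c + integral {c..x} g'" using H1_eq[OF H x] by simp
qed

lemma H1_cong:
  assumes H: "H1_on c d w g" and eq: "\<And>x. x \<in> {c..d} \<Longrightarrow> w' x = w x"
  shows "H1_on c d w' g"
proof (rule H1_onI)
  show "c < d" using H1_lt[OF H] .
  show "L2on c d g" using H1_L2[OF H] .
  fix x assume x: "x \<in> {c..d}"
  have "c \<in> {c..d}" using H1_lt[OF H] by auto
  then show "w' x = w' c + integral {c..x} g" using H1_eq[OF H x] eq[OF x] eq[of c] by simp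
qed

lemma H1_add:
  assumes "H1_on c d w1 g1" "H1_on c d w2 g2"
  shows "H1_on c d (\<lambda>x. w1 x + w2 x) (\<lambda>x. g1 x + g2 x)"
proof (rule H1_onI)
  show "c < d" using assms H1_lt by blast
  show "L2on c d (\<lambda>x. g1 x + g2 x)" using assms by (intro L2on_add H1_L2)
  fix x assume x: "x \<in> {c..d}"
  have i1: "g1 integrable_on {c..x}" and i2: "g2 integrable_on {c..x}"
    using x H1_int[OF assms(1)] H1_int[OF assms(2)] by (auto intro: integrable_subinterval_real)
  show "w1 x + w2 x = w1 c + w2 c + integral {c..x} (\<lambda>x. g1 x + g2 x)"
    using H1_eq[OF assms(1) x] H1_eq[OF assms(2) x] integral_add[OF i1 i2] by simp
qed

lemma H1_cmult:
  assumes "H1_on c d w g"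
  shows "H1_on c d (\<lambda>x. k * w x) (\<lambda>x. k * g x)"
proof (rule H1_onI)
  show "c < d" using assms H1_lt by blast
  show "L2on c d (\<lambda>x. k * g x)" using assms by (intro L2on_cmult H1_L2)
  fix x assume x: "x \<in> {c..d}"
  show "k * w x = k * w c + integral {c..x} (\<lambda>x. k * g x)"
    using H1_eq[OF assms x] by (simp add: algebra_simps)
qed

lemma H1_diff:
  assumes "H1_on c d w1 g1" "H1_on c d w2 g2"
  shows "H1_on c d (\<lambda>x. w1 x - w2 x) (\<lambda>x. g1 x - g2 x)"
  using H1_add[OF assms(1) H1_cmult[OF assms(2), of "-1"]] by simp

lemma H1_affine:
  assumes "c < d" shows "H1_on c d (\<lambda>x. p * x + q) (\<lambda>x. p)"
proof (rule H1_onI)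
  show "L2on c d (\<lambda>x. p)" by (rule L2on_cont) simp
  fix x assume x: "x \<in> {c..d}"
  show "p * x + q = p * c + q + integral {c..x} (\<lambda>x. p)"
    using x by (simp add: algebra_simps)
qed fact

lemma H1_sum:
  assumes "finite J" "c < d" "\<And>j. j \<in> J \<Longrightarrow> H1_on c d (w j) (g j)"
  shows "H1_on c d (\<lambda>x. \<Sum>j\<in>J. w j x) (\<lambda>x. \<Sum>j\<in>J. g j x)"
  using assms
proof (induction J rule: finite_induct)
  case empty
  then show ?case using H1_affine[of c d 0 0] by simp
next
  case (insert j J)
  have "H1_on c d (\<lambda>x. w j x + (\<Sum>j\<in>J. w j x)) (\<lambda>x. g j x + (\<Sum>j\<in>J. g j x))"
    by (rule H1_add) (use insert.prems insert.IH in auto)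
  then show ?case by (simp only: sum.insert[OF insert.hyps])
qed

lemma absint_int: "f absolutely_integrable_on S \<Longrightarrow> (f::real\<Rightarrow>real) integrable_on S"
  using set_lebesgue_integral_eq_integral(1) by blast

lemma bprod:
  fixes f g :: "real \<Rightarrow> real"
  assumes f: "continuous_on {c..d} f" and g: "g absolutely_integrable_on {c..d}"
  shows "(\<lambda>x. f x * g x) absolutely_integrable_on {c..d}"
proof (rule absolutely_integrable_bounded_measurable_product_real)
  show "f \<in> borel_measurable (lebesgue_on {c..d})"
    using f by (rule continuous_imp_measurable_on_sets_lebesgue) simp
  show "{c..d} \<in> sets lebesgue" by simp
  show "bounded (f ` {c..d})"
    by (rule compact_imp_bounded[OF compact_continuous_image[OF f compact_Icc]])
qed fact

lemma lemA:
  fixes g :: "real \<Rightarrow> real"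
  assumes g: "g absolutely_integrable_on {c..d}" and x: "x \<in> {c..d}"
  shows "integral {c..x} (\<lambda>t. (x - t) * g t) = integral {c..x} (\<lambda>t. integral {c..t} g)"
proof -
  define W where "W t = integral {c..t} g" for t
  define T where "T t = integral {c..t} (\<lambda>s. s * g s)" for t
  define A where "A t = integral {c..t} (\<lambda>s. \<bar>g s\<bar>)" for t
  have gi: "g integrable_on {c..d}" using g by (rule absint_int)
  have tga: "(\<lambda>s. s * g s) absolutely_integrable_on {c..d}"
    using bprod[OF continuous_on_id g] by simp
  have tgi: "(\<lambda>s. s * g s) integrable_on {c..d}" using tga by (rule absint_int)
  have agi: "(\<lambda>s. \<bar>g s\<bar>) integrable_on {c..d}"
    using g unfolding absolutely_integrable_on_def by simp
  have sub: "f integrable_on {u..v}" if "f integrable_on {c..d}" "c \<le> u" "v \<le> d" for f :: "real \<Rightarrow> real" and u v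
    by (rule integrable_subinterval_real[OF that(1)]) (use that in auto)
  have diffI: "integral {c..v} f - integral {c..u} f = integral {u..v} f"
    if "f integrable_on {c..d}" "c \<le> u" "u \<le> v" "v \<le> d" for f :: "real \<Rightarrow> real" and u v
  proof -
    have "f integrable_on {c..v}" using sub[OF that(1)] that by auto
    then show ?thesis using hk_combine[of c u v f] that by simp
  qed
  have Hl: "s * (W v - W u) - (T v - T u) = integral {u..v} (\<lambda>t. (s - t) * g t)"
    if "c \<le> u" "u \<le> v" "v \<le> d" for u v s
  proof -
    have i1: "g integrable_on {u..v}" using sub[OF gi] that by auto
    have i2: "(\<lambda>t. t * g t) integrable_on {u..v}" using sub[OF tgi] that by auto
    have "integral {u..v} (\<lambda>t. (s - t) * g t) = integral {u..v} (\<lambda>t. s * g t - t * g t)"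
      by (simp add: algebra_simps)
    also have "\<dots> = integral {u..v} (\<lambda>t. s * g t) - integral {u..v} (\<lambda>t. t * g t)"
      by (rule integral_diff[OF integrable_on_mult_right[OF i1] i2])
    also have "\<dots> = s * integral {u..v} g - integral {u..v} (\<lambda>t. t * g t)"
      by simp
    finally show ?thesis
      unfolding W_def T_def using diffI[OF gi that] diffI[OF tgi that] by simp
  qed
  have Bd: "\<bar>integral {u..v} (\<lambda>t. (s - t) * g t)\<bar> \<le> (v - u) * (A v - A u)"
    if "c \<le> u" "u \<le> v" "v \<le> d" "u \<le> s" "s \<le> v" for u v s
  proof -
    have i1: "g integrable_on {u..v}" using sub[OF gi] that by auto
    have i2: "(\<lambda>t. t * g t) integrable_on {u..v}" using sub[OF tgi] that by auto
    have i3: "(\<lambda>t. \<bar>g t\<bar>) integrable_on {u..v}" using sub[OF agi] that by auto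
    have ist: "(\<lambda>t. (s - t) * g t) integrable_on {u..v}"
    proof -
      have "(\<lambda>t. s * g t - t * g t) integrable_on {u..v}"
        by (rule integrable_diff[OF integrable_on_mult_right[OF i1] i2])
      then show ?thesis by (simp add: algebra_simps)
    qed
    have "norm (integral {u..v} (\<lambda>t. (s - t) * g t)) \<le> integral {u..v} (\<lambda>t. (v - u) * \<bar>g t\<bar>)"
    proof (rule integral_norm_bound_integral[OF ist integrable_on_mult_right[OF i3]])
      fix t assume t: "t \<in> {u..v}"
      have "\<bar>s - t\<bar> \<le> v - u" using t that by auto
      then show "norm ((s - t) * g t) \<le> (v - u) * \<bar>g t\<bar>"
        by (simp add: abs_mult mult_right_mono)
    qed
    also have "\<dots> = (v - u) * integral {u..v} (\<lambda>t. \<bar>g t\<bar>)" by simp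
    also have "integral {u..v} (\<lambda>t. \<bar>g t\<bar>) = A v - A u"
      unfolding A_def using diffI[OF agi that(1-3)] by simp
    finally show ?thesis by simp
  qed
  define \<phi> where "\<phi> y = y * W y - T y" for y
  have Acont: "continuous_on {c..d} A"
    unfolding A_def by (rule indefinite_integral_continuous_1[OF agi])
  have deriv: "(\<phi> has_vector_derivative W y) (at y within {c..d})" if y: "y \<in> {c..d}" for y
    unfolding has_vector_derivative_def has_derivative_within_alt
  proof (intro conjI allI impI)
    show "bounded_linear (\<lambda>h. h *\<^sub>R W y)" by (rule bounded_linear_scaleR_left)
    fix e :: real assume e: "0 < e"
    obtain \<delta> where \<delta>: "\<delta> > 0" "\<And>z. z \<in> {c..d} \<Longrightarrow> dist z y < \<delta> \<Longrightarrow> dist (A z) (A y) < e"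
      using Acont y e unfolding continuous_on_iff by metis
    show "\<exists>\<delta>>0. \<forall>z\<in>{c..d}. norm (z - y) < \<delta> \<longrightarrow> norm (\<phi> z - \<phi> y - (z - y) *\<^sub>R W y) \<le> e * norm (z - y)"
    proof (intro exI[of _ \<delta>] conjI ballI impI)
      show "\<delta> > 0" by fact
      fix z assume z: "z \<in> {c..d}" and zy: "norm (z - y) < \<delta>"
      have Ae: "\<bar>A z - A y\<bar> < e" using \<delta>(2)[OF z] zy by (simp add: dist_real_def)
      show "norm (\<phi> z - \<phi> y - (z - y) *\<^sub>R W y) \<le> e * norm (z - y)"
      proof (cases "y \<le> z")
        case True
        have "\<phi> z - \<phi> y - (z - y) *\<^sub>R W y = z * (W z - W y) - (T z - T y)"
          unfolding \<phi>_def by (simp add: algebra_simps)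
        also have "\<dots> = integral {y..z} (\<lambda>t. (z - t) * g t)"
          by (rule Hl) (use y z True in auto)
        finally have eq: "\<phi> z - \<phi> y - (z - y) *\<^sub>R W y = integral {y..z} (\<lambda>t. (z - t) * g t)" .
        have "\<bar>integral {y..z} (\<lambda>t. (z - t) * g t)\<bar> \<le> (z - y) * (A z - A y)"
          by (rule Bd) (use y z True in auto)
        also have "\<dots> \<le> (z - y) * e"
          using Ae True by (intro mult_left_mono) auto
        finally show ?thesis using eq True by (simp add: mult.commute)
      next
        case False
        have "\<phi> z - \<phi> y - (z - y) *\<^sub>R W y = - (z * (W y - W z) - (T y - T z))"
          unfolding \<phi>_def by (simp add: algebra_simps)
        also have "z * (W y - W z) - (T y - T z) = integral {z..y} (\<lambda>t. (z - t) * g t)"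
          by (rule Hl) (use y z False in auto)
        finally have eq: "\<phi> z - \<phi> y - (z - y) *\<^sub>R W y = - integral {z..y} (\<lambda>t. (z - t) * g t)" .
        have "\<bar>integral {z..y} (\<lambda>t. (z - t) * g t)\<bar> \<le> (y - z) * (A y - A z)"
          by (rule Bd) (use y z False in auto)
        also have "\<dots> \<le> (y - z) * e"
          using Ae False by (intro mult_left_mono) auto
        finally show ?thesis using eq False by (simp add: mult.commute)
      qed
    qed
  qed
  have cx: "c \<le> x" "x \<le> d" using x by auto
  have "(W has_integral (\<phi> x - \<phi> c)) {c..x}"
  proof (rule fundamental_theorem_of_calculus[OF cx(1)])
    fix y assume y: "y \<in> {c..x}"
    show "(\<phi> has_vector_derivative W y) (at y within {c..x})"
      by (rule has_vector_derivative_within_subset[OF deriv]) (use y cx in auto)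
  qed
  then have "integral {c..x} W = \<phi> x - \<phi> c" by (rule integral_unique)
  also have "\<phi> x - \<phi> c = x * (W x - W c) - (T x - T c)"
    unfolding \<phi>_def W_def T_def by simp
  also have "\<dots> = integral {c..x} (\<lambda>t. (x - t) * g t)"
    by (rule Hl) (use cx in auto)
  finally show ?thesis unfolding W_def by simp
qed

lemma affine_bounded:
  obtains B where "\<And>x. x \<in> {c..d} \<Longrightarrow> \<bar>p * x + q\<bar> \<le> (B::real)"
proof -
  have "bounded ((\<lambda>x. p * x + q) ` {c..d})"
    by (intro compact_imp_bounded compact_continuous_image continuous_intros compact_Icc)
  then obtain B where "\<forall>y\<in>(\<lambda>x. p * x + q) ` {c..d}. norm y \<le> B" by (auto simp: bounded_iff)
  then show ?thesis by (intro that[of B]) auto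
qed

lemma H1_mult_affine:
  assumes H: "H1_on c d w g"
  shows "H1_on c d (\<lambda>x. (p * x + q) * w x) (\<lambda>x. p * w x + (p * x + q) * g x)"
proof (rule H1_onI)
  have cd: "c < d" using H1_lt[OF H] .
  then show "c < d" .
  have wc: "continuous_on {c..d} w" by (rule H1_cont[OF H])
  have ga: "g absolutely_integrable_on {c..d}" using L2on_absint[OF H1_L2[OF H]] .
  obtain B where B: "\<And>x. x \<in> {c..d} \<Longrightarrow> \<bar>p * x + q\<bar> \<le> B" using affine_bounded by blast
  have lm: "(\<lambda>x. p * x + q) \<in> borel_measurable (lebesgue_on {c..d})"
    by (rule continuous_imp_measurable_on_sets_lebesgue) (auto intro!: continuous_intros)
  show "L2on c d (\<lambda>x. p * w x + (p * x + q) * g x)"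
    by (rule L2on_add[OF L2on_cmult[OF L2on_cont[OF wc]] L2on_mult_bounded[OF lm B H1_L2[OF H]]])
  fix x assume x: "x \<in> {c..d}"
  have cx: "c \<le> x" "x \<le> d" using x by auto
  define W where "W t = integral {c..t} g" for t
  have weq: "w t = w c + W t" if "t \<in> {c..x}" for t
    unfolding W_def by (rule H1_eq[OF H]) (use that cx in auto)
  have gi: "g integrable_on {c..x}"
    by (rule integrable_subinterval_real[OF H1_int[OF H]]) (use cx in auto)
  have Wc: "continuous_on {c..x} W"
    unfolding W_def by (rule indefinite_integral_continuous_1[OF gi])
  have Wi: "W integrable_on {c..x}" by (rule integrable_continuous_interval[OF Wc])
  have wi: "w integrable_on {c..x}"
    by (rule integrable_continuous_interval) (rule continuous_on_subset[OF wc], use cx in auto)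
  have lga: "(\<lambda>t. (p * t + q) * g t) absolutely_integrable_on {c..d}"
    by (rule bprod[OF _ ga]) (auto intro!: continuous_intros)
  have lgi: "(\<lambda>t. (p * t + q) * g t) integrable_on {c..x}"
    by (rule integrable_subinterval_real[OF absint_int[OF lga]]) (use cx in auto)
  have xga: "(\<lambda>t. (x - t) * g t) absolutely_integrable_on {c..d}"
    by (rule bprod[OF _ ga]) (auto intro!: continuous_intros)
  have xgi: "(\<lambda>t. (x - t) * g t) integrable_on {c..x}"
    by (rule integrable_subinterval_real[OF absint_int[OF xga]]) (use cx in auto)
  have I1: "integral {c..x} w = w c * (x - c) + integral {c..x} W"
  proof -
    have "integral {c..x} w = integral {c..x} (\<lambda>t. w c + W t)"
      by (rule integral_cong) (rule weq)
    also have "\<dots> = integral {c..x} (\<lambda>t. w c) + integral {c..x} W"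
      by (rule integral_add[OF integrable_const_ivl Wi])
    also have "integral {c..x} (\<lambda>t. w c) = w c * (x - c)" using cx by simp
    finally show ?thesis .
  qed
  have I2: "integral {c..x} (\<lambda>t. (p * t + q) * g t) = (p * x + q) * W x - p * integral {c..x} W"
  proof -
    have "integral {c..x} (\<lambda>t. (p * t + q) * g t) = integral {c..x} (\<lambda>t. (p * x + q) * g t - p * ((x - t) * g t))"
      by (rule integral_cong) (simp add: algebra_simps)
    also have "\<dots> = integral {c..x} (\<lambda>t. (p * x + q) * g t) - integral {c..x} (\<lambda>t. p * ((x - t) * g t))"
      by (rule integral_diff[OF integrable_on_mult_right[OF gi] integrable_on_mult_right[OF xgi]])
    also have "\<dots> = (p * x + q) * W x - p * integral {c..x} (\<lambda>t. (x - t) * g t)"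
      unfolding W_def by simp
    also have "integral {c..x} (\<lambda>t. (x - t) * g t) = integral {c..x} W"
      unfolding W_def by (rule lemA[OF ga x])
    finally show ?thesis .
  qed
  have "integral {c..x} (\<lambda>t. p * w t + (p * t + q) * g t) = p * integral {c..x} w + integral {c..x} (\<lambda>t. (p * t + q) * g t)"
    using integral_add[OF integrable_on_mult_right[OF wi] lgi] by simp
  also have "\<dots> = p * (w c * (x - c)) + (p * x + q) * W x"
    unfolding I1 I2 by (simp add: algebra_simps)
  finally have "integral {c..x} (\<lambda>t. p * w t + (p * t + q) * g t) = p * (w c * (x - c)) + (p * x + q) * W x" .
  moreover have "w x = w c + W x" using weq[of x] cx by auto
  ultimately show "(p * x + q) * w x = (p * c + q) * w c + integral {c..x} (\<lambda>x. p * w x + (p * x + q) * g x)"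
    by (simp add: algebra_simps)
qed

lemma H1_energy_unique:
  assumes H1: "H1_on c d w g1" and H2: "H1_on c d w g2"
  shows "integral {c..d} (\<lambda>x. a x * (g1 x)^2) = integral {c..d} (\<lambda>x. a x * (g2 x)^2)"
proof -
  have ha: "(\<lambda>x. g1 x - g2 x) absolutely_integrable_on {c..d}"
    using set_integral_diff(1)[OF L2on_absint[OF H1_L2[OF H1]] L2on_absint[OF H1_L2[OF H2]]] .
  have z: "\<forall>x\<in>{c..d}. integral {c..x} (\<lambda>x. g1 x - g2 x) = 0"
  proof
    fix x assume x: "x \<in> {c..d}"
    have i1: "g1 integrable_on {c..x}"
      by (rule integrable_subinterval_real[OF H1_int[OF H1]]) (use x in auto)
    have i2: "g2 integrable_on {c..x}"
      by (rule integrable_subinterval_real[OF H1_int[OF H2]]) (use x in auto)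
    have "integral {c..x} (\<lambda>x. g1 x - g2 x) = integral {c..x} g1 - integral {c..x} g2"
      by (rule integral_diff[OF i1 i2])
    also have "\<dots> = 0" using H1_eq[OF H1 x] H1_eq[OF H2 x] by simp
    finally show "integral {c..x} (\<lambda>x. g1 x - g2 x) = 0" .
  qed
  have neg: "negligible {x \<in> {c..d}. g1 x - g2 x \<noteq> 0}" by (rule zero_ae[OF ha z])
  show ?thesis
    by (rule integral_spike[OF neg]) auto
qed

lemma wderiv_H1: "H1_on c d w g \<Longrightarrow> H1_on c d w (wderiv c d w)"
  unfolding wderiv_def by (rule someI[where P="\<lambda>g. H1_on c d w g"])

lemma energy_norm_eq:
  assumes "H1_on c d w g"
  shows "energy_norm a c d w = sqrt (integral {c..d} (\<lambda>x. a x * (g x)^2))"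
  unfolding energy_norm_def using H1_energy_unique[OF wderiv_H1[OF assms] assms] by simp

lemma CS_int:
  fixes g :: "real \<Rightarrow> real"
  assumes cx: "c \<le> x" and gi: "g integrable_on {c..x}" and g2: "(\<lambda>t. (g t)^2) integrable_on {c..x}"
  shows "(integral {c..x} g)^2 \<le> (x - c) * integral {c..x} (\<lambda>t. (g t)^2)"
proof (cases "x = c")
  case True then show ?thesis by simp
next
  case False
  define L where "L = x - c"
  have L: "L > 0" using cx False by (simp add: L_def)
  define I where "I = integral {c..x} g"
  define Q where "Q = integral {c..x} (\<lambda>t. (g t)^2)"
  define s where "s = I / L"
  have "integral {c..x} (\<lambda>t. (g t - s)^2) = integral {c..x} (\<lambda>t. ((g t)^2 - 2 * s * g t) + s^2)"
    by (rule integral_cong) (simp add: power2_eq_square algebra_simps)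
  also have "\<dots> = integral {c..x} (\<lambda>t. (g t)^2 - 2 * s * g t) + integral {c..x} (\<lambda>t. s^2)"
    by (rule integral_add[OF integrable_diff[OF g2 integrable_on_mult_right[OF gi]] integrable_const_ivl])
  also have "integral {c..x} (\<lambda>t. (g t)^2 - 2 * s * g t) = Q - 2 * s * I"
    unfolding Q_def I_def using integral_diff[OF g2 integrable_on_mult_right[OF gi], of "2 * s"] by simp
  also have "integral {c..x} (\<lambda>t. s^2) = s^2 * L" using cx by (simp add: L_def)
  finally have e: "integral {c..x} (\<lambda>t. (g t - s)^2) = Q - 2 * s * I + s^2 * L" .
  have "0 \<le> integral {c..x} (\<lambda>t. (g t - s)^2)"
  proof (rule integral_nonneg)
    have "(\<lambda>t. ((g t)^2 - 2 * s * g t) + s^2) integrable_on {c..x}"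
      by (rule integrable_add[OF integrable_diff[OF g2 integrable_on_mult_right[OF gi]] integrable_const_ivl])
    then show "(\<lambda>t. (g t - s)^2) integrable_on {c..x}"
      by (simp add: power2_eq_square algebra_simps)
  qed simp
  then have "0 \<le> Q - 2 * s * I + s^2 * L" using e by simp
  also have "Q - 2 * s * I + s^2 * L = Q - I^2 / L"
    unfolding s_def using L by (simp add: power2_eq_square field_simps)
  finally have "I^2 / L \<le> Q" by simp
  then have "I^2 \<le> Q * L" using L by (simp add: pos_divide_le_eq)
  then show ?thesis unfolding I_def Q_def L_def by (simp add: mult.commute)
qed

lemma poincare:
  assumes H: "H1_on c d e g" and e0: "e c = 0"
  shows "integral {c..d} (\<lambda>x. (e x)^2) \<le> (d - c)^2 * integral {c..d} (\<lambda>x. (g x)^2)"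
proof -
  have cd: "c < d" using H1_lt[OF H] .
  define K where "K = integral {c..d} (\<lambda>x. (g x)^2)"
  have g2: "(\<lambda>x. (g x)^2) integrable_on {c..d}" using H1_L2[OF H] unfolding L2on_def by blast
  have pt: "(e x)^2 \<le> (d - c) * K" if x: "x \<in> {c..d}" for x
  proof -
    have cx: "c \<le> x" "x \<le> d" using x by auto
    have ex: "e x = integral {c..x} g" using H1_eq[OF H x] e0 by simp
    have gi: "g integrable_on {c..x}"
      by (rule integrable_subinterval_real[OF H1_int[OF H]]) (use cx in auto)
    have g2x: "(\<lambda>t. (g t)^2) integrable_on {c..x}"
      by (rule integrable_subinterval_real[OF g2]) (use cx in auto)
    have "(e x)^2 \<le> (x - c) * integral {c..x} (\<lambda>t. (g t)^2)"
      unfolding ex by (rule CS_int[OF cx(1) gi g2x])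
    also have "\<dots> \<le> (d - c) * K"
    proof (rule mult_mono)
      show "x - c \<le> d - c" using cx by simp
      show "integral {c..x} (\<lambda>t. (g t)^2) \<le> K"
        unfolding K_def by (rule integral_subset_le[OF _ g2x g2]) (use cx in auto)
      show "0 \<le> d - c" using cd by simp
      show "0 \<le> integral {c..x} (\<lambda>t. (g t)^2)" by (rule integral_nonneg[OF g2x]) simp
    qed
    finally show ?thesis .
  qed
  have ec: "continuous_on {c..d} (\<lambda>x. (e x)^2)"
    using H1_cont[OF H] by (intro continuous_intros)
  have "integral {c..d} (\<lambda>x. (e x)^2) \<le> integral {c..d} (\<lambda>x. (d - c) * K)"
    by (rule integral_le[OF integrable_continuous_interval[OF ec] integrable_const_ivl]) (rule pt)
  also have "\<dots> = (d - c)^2 * K" using cd by (simp add: power2_eq_square)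
  finally show ?thesis unfolding K_def .
qed

lemma node_0[simp]: "node N 0 = 0" by (simp add: node_def)
lemma node_N[simp]: "N \<ge> 1 \<Longrightarrow> node N N = 1" by (simp add: node_def)
lemma node_mono: "N \<ge> 1 \<Longrightarrow> k \<le> m \<Longrightarrow> node N k \<le> node N m"
  by (simp add: node_def divide_right_mono)
lemma node_strict: "N \<ge> 1 \<Longrightarrow> k < m \<Longrightarrow> node N k < node N m"
  by (simp add: node_def divide_strict_right_mono)
lemma node_Suc: "N \<ge> 1 \<Longrightarrow> node N (Suc k) - node N k = 1 / real N"
  by (simp add: node_def diff_divide_distrib[symmetric])

lemma hat_ge0: "0 \<le> hat N k x" by (simp add: hat_def)
lemma hat_le1: "hat N k x \<le> 1" by (simp add: hat_def)

lemma elt_Nx: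
  assumes N: "N \<ge> 1" and x: "x \<in> {node N (k - 1)..node N k}" and k: "k \<ge> 1"
  shows "real k - 1 \<le> real N * x" "real N * x \<le> real k"
proof -
  have Np: "real N > 0" using N by simp
  have "real (k - 1) / real N \<le> x" "x \<le> real k / real N" using x by (auto simp: node_def)
  then have "real (k - 1) \<le> real N * x" "real N * x \<le> real k"
    using Np by (auto simp: field_simps)
  then show "real k - 1 \<le> real N * x" "real N * x \<le> real k" using k by (auto simp: of_nat_diff)
qed

lemma hat_elt:
  assumes N: "N \<ge> 1" and x: "x \<in> {node N (k - 1)..node N k}" and k: "k \<ge> 1"
  shows "hat N k x = real N * x - (real k - 1)"
    and "hat N (k - 1) x = real k - real N * x"
    and "i \<noteq> k \<Longrightarrow> i \<noteq> k - 1 \<Longrightarrow> hat N i x = 0"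
proof -
  note b = elt_Nx[OF N x k]
  show "hat N k x = real N * x - (real k - 1)" using b by (simp add: hat_def abs_if)
  show "hat N (k - 1) x = real k - real N * x" using b k by (simp add: hat_def abs_if of_nat_diff)
  assume "i \<noteq> k" "i \<noteq> k - 1"
  then have "i + 2 \<le> k \<or> k + 1 \<le> i" by auto
  then have "real i + 2 \<le> real k \<or> real k + 1 \<le> real i" by linarith
  then show "hat N i x = 0" using b by (auto simp: hat_def abs_if)
qed

lemma hat_affine_elt:
  assumes N: "N \<ge> 1" and k: "k \<ge> 1"
  obtains p q where "\<And>x. x \<in> {node N (k - 1)..node N k} \<Longrightarrow> hat N m x = p * x + q"
proof (cases "m = k")
  case True
  show ?thesis by (rule that[of "real N" "1 - real k"]) (use hat_elt(1)[OF N _ k] True in auto)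
next
  case False
  show ?thesis
  proof (cases "m = k - 1")
    case True
    show ?thesis by (rule that[of "- real N" "real k"]) (use hat_elt(2)[OF N _ k] True in auto)
  next
    case False2: False
    show ?thesis by (rule that[of 0 0]) (use hat_elt(3)[OF N _ k] False False2 in auto)
  qed
qed

lemma sum_hat_elt:
  assumes N: "N \<ge> 1" and x: "x \<in> {node N (k - 1)..node N k}" and k: "k \<ge> 1"
    and S: "finite S" "k - 1 \<in> S" "k \<in> S"
  shows "(\<Sum>m\<in>S. hat N m x * F m) = hat N (k - 1) x * F (k - 1) + hat N k x * F k"
proof -
  have "(\<Sum>m\<in>S. hat N m x * F m) = (\<Sum>m\<in>{k - 1, k}. hat N m x * F m)"
    by (rule sum.mono_neutral_right[OF S(1)]) (use S hat_elt(3)[OF N x k] in auto)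
  also have "\<dots> = hat N (k - 1) x * F (k - 1) + hat N k x * F k"
    using k by simp
  finally show ?thesis .
qed

lemma hat_sum1:
  assumes N: "N \<ge> 1" and x: "x \<in> {node N (k - 1)..node N k}" and k: "k \<ge> 1"
  shows "hat N (k - 1) x + hat N k x = 1"
  using hat_elt(1,2)[OF N x k] by simp

lemma pv_finite: "finite (patch_vertices N i)"
  by (rule finite_subset[of _ "{..N}"]) (auto simp: patch_vertices_def)

lemma pv_sub: "patch_vertices N i \<subseteq> {0..N}"
  by (auto simp: patch_vertices_def)

lemma interp_elt:
  assumes N: "N \<ge> 1" and x: "x \<in> {node N (k - 1)..node N k}" and k: "k \<ge> 1" "k \<le> N"
    and i: "i = k - 1 \<or> i = k"
  shows "patch_interp N i w x = w (node N (k - 1)) * hat N (k - 1) x + w (node N k) * hat N k x"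
proof -
  have "patch_interp N i w x = (\<Sum>m\<in>patch_vertices N i. hat N m x * w (node N m))"
    unfolding patch_interp_def by (simp add: mult.commute)
  also have "\<dots> = hat N (k - 1) x * w (node N (k - 1)) + hat N k x * w (node N k)"
    by (rule sum_hat_elt[OF N x k(1) pv_finite]) (use i k in \<open>auto simp: patch_vertices_def\<close>)
  finally show ?thesis by (simp add: mult.commute)
qed

lemma patch_l_eq: "patch_l N i = node N (i - 1)"
  by (simp add: patch_l_def)

lemma patch_r_eq: "N \<ge> 1 \<Longrightarrow> i \<le> N \<Longrightarrow> patch_r N i = node N (min (i + 1) N)"
  by (auto simp: patch_r_def min_def)

lemma patch_lt: "N \<ge> 1 \<Longrightarrow> i \<le> N \<Longrightarrow> patch_l N i < patch_r N i"
  unfolding patch_l_eq patch_r_eq by (rule node_strict) auto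

lemma patch_in01: "N \<ge> 1 \<Longrightarrow> i \<le> N \<Longrightarrow> 0 \<le> patch_l N i \<and> patch_r N i \<le> 1"
  unfolding patch_l_eq patch_r_eq
  using node_mono[of N 0 "i - 1"] node_mono[of N "min (i + 1) N" N] by auto

lemma patch_diam: "N \<ge> 1 \<Longrightarrow> i \<le> N \<Longrightarrow> patch_r N i - patch_l N i \<le> 2 / real N"
  unfolding patch_l_eq patch_r_eq
  by (auto simp: node_def min_def diff_divide_distrib[symmetric] of_nat_diff divide_right_mono)

lemma elt_in_patch:
  assumes N: "N \<ge> 1" and k: "k \<ge> 1" "k \<le> N" and i: "i = k - 1 \<or> i = k"
  shows "patch_l N i \<le> node N (k - 1)" "node N k \<le> patch_r N i"
proof -
  have iN: "i \<le> N" using i k by auto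
  show "patch_l N i \<le> node N (k - 1)" unfolding patch_l_eq by (rule node_mono) (use N i in auto)
  show "node N k \<le> patch_r N i" unfolding patch_r_eq[OF N iN] by (rule node_mono) (use N i k in auto)
qed

lemma elt_lt: "N \<ge> 1 \<Longrightarrow> k \<ge> 1 \<Longrightarrow> node N (k - 1) < node N k"
  by (rule node_strict) auto

lemma patch_integral:
  fixes f :: "real \<Rightarrow> real"
  assumes N: "N \<ge> 1" and i: "i \<le> N" and f: "f integrable_on {patch_l N i..patch_r N i}"
  shows "integral {patch_l N i..patch_r N i} f =
           (if 1 \<le> i then integral {node N (i - 1)..node N i} f else 0)
         + (if i + 1 \<le> N then integral {node N i..node N (i + 1)} f else 0)"
proof -
  consider "i = 0" | "i = N" "i \<ge> 1" | "1 \<le> i" "i < N" using N i by linarith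
  then show ?thesis
  proof cases
    case 1
    then have "patch_l N i = node N 0" "patch_r N i = node N 1" using N by (auto simp: patch_l_def patch_r_def)
    then show ?thesis using 1 N by simp
  next
    case 2
    then have "patch_l N i = node N (i - 1)" "patch_r N i = node N i" using N by (auto simp: patch_l_def patch_r_def)
    then show ?thesis using 2 by simp
  next
    case 3
    then have e: "patch_l N i = node N (i - 1)" "patch_r N i = node N (i + 1)" by (auto simp: patch_l_def patch_r_def)
    show ?thesis using 3 hk_combine[of "node N (i - 1)" "node N i" "node N (i + 1)" f] f e N
      by (simp add: node_mono)
  qed
qed

lemma H1_patch_from_elts:
  assumes N: "N \<ge> 1" and i: "i \<le> N"
    and E: "\<And>k. 1 \<le> k \<Longrightarrow> k \<le> N \<Longrightarrow> (k = i \<or> k = i + 1) \<Longrightarrow> \<exists>g. H1_on (node N (k - 1)) (node N k) w g"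
  shows "\<exists>g. H1_on (patch_l N i) (patch_r N i) w g"
proof -
  consider "i = 0" | "i = N" "i \<ge> 1" | "1 \<le> i" "i < N" using N i by linarith
  then show ?thesis
  proof cases
    case 1
    then have "patch_l N i = node N 0" "patch_r N i = node N 1" using N by (auto simp: patch_l_def patch_r_def)
    then show ?thesis using E[of 1] 1 N by simp
  next
    case 2
    then have "patch_l N i = node N (i - 1)" "patch_r N i = node N i" using N by (auto simp: patch_l_def patch_r_def)
    then show ?thesis using E[of i] 2 by simp
  next
    case 3
    then have e: "patch_l N i = node N (i - 1)" "patch_r N i = node N (i + 1)" by (auto simp: patch_l_def patch_r_def)
    obtain g1 where g1: "H1_on (node N (i - 1)) (node N i) w g1" using E[of i] 3 by auto
    obtain g2 where g2: "H1_on (node N i) (node N (i + 1)) w g2" using E[of "i + 1"] 3 by auto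
    define G where "G x = (if x \<le> node N i then g1 x else g2 x)" for x
    have "H1_on (node N (i - 1)) (node N i) w G"
      by (rule H1_spike[OF g1, of "{}"]) (auto simp: G_def)
    moreover have "H1_on (node N i) (node N (i + 1)) w G"
      by (rule H1_spike[OF g2, of "{node N i}"]) (auto simp: G_def)
    ultimately have "H1_on (node N (i - 1)) (node N (i + 1)) w G" by (rule H1_glue)
    then show ?thesis using e by auto
  qed
qed

lemma hat_H1_patch:
  assumes N: "N \<ge> 1" and i: "i \<le> N"
  shows "\<exists>g. H1_on (patch_l N i) (patch_r N i) (hat N m) g"
proof (rule H1_patch_from_elts[OF N i])
  fix k assume k: "1 \<le> k" "k \<le> N"
  obtain p q where pq: "\<And>x. x \<in> {node N (k - 1)..node N k} \<Longrightarrow> hat N m x = p * x + q"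
    using hat_affine_elt[OF N k(1)] by blast
  have "H1_on (node N (k - 1)) (node N k) (\<lambda>x. p * x + q) (\<lambda>x. p)"
    by (rule H1_affine) (rule elt_lt[OF N k(1)])
  then have "H1_on (node N (k - 1)) (node N k) (hat N m) (\<lambda>x. p)"
    by (rule H1_cong) (rule pq)
  then show "\<exists>g. H1_on (node N (k - 1)) (node N k) (hat N m) g" by blast
qed

lemma interp_H1_patch:
  assumes N: "N \<ge> 1" and i: "i \<le> N"
  shows "\<exists>g. H1_on (patch_l N i) (patch_r N i) (patch_interp N i w) g"
proof -
  have "\<forall>m\<in>patch_vertices N i. \<exists>g. H1_on (patch_l N i) (patch_r N i) (\<lambda>x. w (node N m) * hat N m x) g"
  proof
    fix m
    obtain g where "H1_on (patch_l N i) (patch_r N i) (hat N m) g" using hat_H1_patch[OF N i] by blast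
    then show "\<exists>g. H1_on (patch_l N i) (patch_r N i) (\<lambda>x. w (node N m) * hat N m x) g"
      using H1_cmult by blast
  qed
  then obtain G where G: "\<And>m. m \<in> patch_vertices N i \<Longrightarrow> H1_on (patch_l N i) (patch_r N i) (\<lambda>x. w (node N m) * hat N m x) (G m)"
    by metis
  have "H1_on (patch_l N i) (patch_r N i) (\<lambda>x. \<Sum>m\<in>patch_vertices N i. w (node N m) * hat N m x) (\<lambda>x. \<Sum>m\<in>patch_vertices N i. G m x)"
    by (rule H1_sum[OF pv_finite patch_lt[OF N i]]) (rule G)
  then show ?thesis unfolding patch_interp_def by blast
qed

lemma int_mono_open:
  fixes f h :: "real \<Rightarrow> real"
  assumes "f integrable_on {c..d}" "h integrable_on {c..d}" "\<And>x. x \<in> {c<..<d} \<Longrightarrow> f x \<le> h x"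
  shows "integral {c..d} f \<le> integral {c..d} h"
proof -
  have "integral {c<..<d} f \<le> integral {c<..<d} h"
    by (rule integral_le) (use assms integrable_on_open_interval_real in auto)
  then show ?thesis by (simp add: integral_open_interval_real)
qed

lemma int_nonneg_open:
  fixes f :: "real \<Rightarrow> real"
  assumes "f integrable_on {c..d}" "\<And>x. x \<in> {c<..<d} \<Longrightarrow> 0 \<le> f x"
  shows "0 \<le> integral {c..d} f"
proof -
  have "integral {c..d} (\<lambda>x. 0) \<le> integral {c..d} f"
    by (rule int_mono_open) (use assms in auto)
  then show ?thesis by simp
qed

lemma sq4: "((t1::real) + t2 + t3 + t4)^2 \<le> 4 * (t1^2 + t2^2 + t3^2 + t4^2)"
proof -
  have e: "4 * (t1^2 + t2^2 + t3^2 + t4^2) - (t1 + t2 + t3 + t4)^2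
     = (t1-t2)^2 + (t1-t3)^2 + (t1-t4)^2 + (t2-t3)^2 + (t2-t4)^2 + (t3-t4)^2"
    by (simp add: power2_eq_square algebra_simps)
  have "0 \<le> (t1-t2)^2 + (t1-t3)^2 + (t1-t4)^2 + (t2-t3)^2 + (t2-t4)^2 + (t3-t4)^2" by simp
  then show ?thesis using e by linarith
qed

locale coef =
  fixes a :: "real \<Rightarrow> real" and \<alpha> \<beta> :: real
  assumes am: "a \<in> borel_measurable (lebesgue_on {0..1})"
    and ab: "\<And>x. x \<in> {0<..<1} \<Longrightarrow> \<alpha> \<le> a x \<and> a x \<le> \<beta>"
    and \<alpha>: "0 < \<alpha>"
begin

lemma a_bounded: "x \<in> {0..1} \<Longrightarrow> \<bar>a x\<bar> \<le> max \<beta> (max \<bar>a 0\<bar> \<bar>a 1\<bar>)"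
proof -
  assume x: "x \<in> {0..1}"
  show ?thesis
  proof (cases "x \<in> {0<..<1}")
    case True then show ?thesis using ab[OF True] \<alpha> by auto
  next
    case False then have "x = 0 \<or> x = 1" using x by auto
    then show ?thesis by auto
  qed
qed

lemma aint:
  assumes cd: "0 \<le> c" "d \<le> 1" and g: "L2on c d g"
  shows "(\<lambda>x. a x * (g x)^2) integrable_on {c..d}"
proof -
  have "(\<lambda>x. a x * (g x)^2) absolutely_integrable_on {c..d}"
  proof (rule absolutely_integrable_bounded_measurable_product_real)
    show "a \<in> borel_measurable (lebesgue_on {c..d})"
      using measurable_restrict_mono[of a lebesgue "{0..1}" borel "{c..d}"] am cd by auto
    show "{c..d} \<in> sets lebesgue" by simp
    show "bounded (a ` {c..d})"
      unfolding bounded_iff using a_bounded cd by (intro exI[of _ "max \<beta> (max \<bar>a 0\<bar> \<bar>a 1\<bar>)"]) auto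
    show "(\<lambda>x. (g x)^2) absolutely_integrable_on {c..d}"
      by (rule nonnegative_absolutely_integrable_1) (use g in \<open>auto simp: L2on_def\<close>)
  qed
  then show ?thesis by (rule absint_int)
qed

lemma energy_sq:
  assumes cd: "0 \<le> c" "d \<le> 1" and H: "H1_on c d w g"
  shows "(energy_norm a c d w)^2 = integral {c..d} (\<lambda>x. a x * (g x)^2)"
    and "0 \<le> energy_norm a c d w"
proof -
  have nn: "0 \<le> integral {c..d} (\<lambda>x. a x * (g x)^2)"
  proof (rule int_nonneg_open[OF aint[OF cd H1_L2[OF H]]])
    fix x assume "x \<in> {c<..<d}"
    then have "x \<in> {0<..<1}" using cd by auto
    then have "0 \<le> a x" using ab \<alpha> by force
    then show "0 \<le> a x * (g x)^2" by simp
  qed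
  show "(energy_norm a c d w)^2 = integral {c..d} (\<lambda>x. a x * (g x)^2)"
    unfolding energy_norm_eq[OF H] using nn by simp
  show "0 \<le> energy_norm a c d w" unfolding energy_norm_eq[OF H] using nn by simp
qed

lemma L2_le_energy:
  assumes cd: "0 \<le> c" "d \<le> 1" and g: "L2on c d g"
  shows "integral {c..d} (\<lambda>x. (g x)^2) \<le> integral {c..d} (\<lambda>x. a x * (g x)^2) / \<alpha>"
proof -
  have "integral {c..d} (\<lambda>x. \<alpha> * (g x)^2) \<le> integral {c..d} (\<lambda>x. a x * (g x)^2)"
  proof (rule int_mono_open)
    show "(\<lambda>x. \<alpha> * (g x)^2) integrable_on {c..d}"
      using g by (intro integrable_on_mult_right) (simp add: L2on_def)
    show "(\<lambda>x. a x * (g x)^2) integrable_on {c..d}" by (rule aint[OF cd g])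
    fix x assume "x \<in> {c<..<d}"
    then have "x \<in> {0<..<1}" using cd by auto
    then have "\<alpha> \<le> a x" using ab by blast
    then show "\<alpha> * (g x)^2 \<le> a x * (g x)^2" by (simp add: mult_right_mono)
  qed
  then have "\<alpha> * integral {c..d} (\<lambda>x. (g x)^2) \<le> integral {c..d} (\<lambda>x. a x * (g x)^2)" by simp
  then show ?thesis using \<alpha> by (simp add: field_simps)
qed

end

locale mesh = coef a \<alpha> \<beta> for a \<alpha> \<beta> +
  fixes N :: nat and u :: "real \<Rightarrow> real" and n :: "nat \<Rightarrow> nat"
    and \<phi> :: "nat \<Rightarrow> nat \<Rightarrow> real \<Rightarrow> real" and \<xi> :: "nat \<Rightarrow> real \<Rightarrow> real" and \<epsilon> :: "nat \<Rightarrow> real"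
    and C\<^sub>1 :: real
  assumes N: "1 \<le> N" and uH: "\<exists>g. H1_on 0 1 u g" and u0: "u 0 = 0"
    and \<phi>H: "\<forall>i\<le>N. \<forall>j\<le>n i. \<exists>g. H1_on (patch_l N i) (patch_r N i) (\<phi> i j) g"
    and hyp: "\<forall>i\<in>T2 N \<phi> n.
       \<xi> i \<in> Vbar N \<phi> n i \<and> 0 \<le> \<epsilon> i \<and>
       L2_norm (patch_l N i) (patch_r N i) (\<lambda>x. u x - patch_interp N i u x - \<xi> i x)
         \<le> C\<^sub>1 * (patch_r N i - patch_l N i) *
           energy_norm a (patch_l N i) (patch_r N i) (\<lambda>x. u x - patch_interp N i u x - \<xi> i x) \<and>
       energy_norm a (patch_l N i) (patch_r N i) (\<lambda>x. u x - patch_interp N i u x - \<xi> i x) \<le> \<epsilon> i"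
    and C1: "0 < C\<^sub>1" and \<alpha>\<beta>: "\<alpha> \<le> \<beta>"
begin

abbreviation "pl i \<equiv> patch_l N i"
abbreviation "pr i \<equiv> patch_r N i"
abbreviation "TT \<equiv> T2 N \<phi> n"

definition xi' :: "nat \<Rightarrow> real \<Rightarrow> real" where
  "xi' i = (if i \<in> TT then \<xi> i else (\<lambda>x. 0))"

definition e :: "nat \<Rightarrow> real \<Rightarrow> real" where
  "e i x = u x - patch_interp N i u x - xi' i x"

definition v :: "real \<Rightarrow> real" where
  "v x = (\<Sum>i\<in>{1..N}. u (node N i) * hat N i x) + (\<Sum>i\<in>TT. hat N i x * \<xi> i x)"

lemma TT_sub: "TT \<subseteq> {0..N}" by (auto simp: T2_def)
lemma TT_fin: "finite TT" using TT_sub finite_subset by blast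

lemma e_T2: "i \<in> TT \<Longrightarrow> e i = (\<lambda>x. u x - patch_interp N i u x - \<xi> i x)"
  by (auto simp: e_def xi'_def)

lemma e_nT2: "i \<notin> TT \<Longrightarrow> e i = (\<lambda>x. u x - patch_interp N i u x)"
  by (auto simp: e_def xi'_def)

lemma in_S_v: "in_S N \<phi> n v"
  unfolding in_S_def
  by (rule exI[of _ "\<lambda>i. u (node N i)"], rule exI[of _ \<xi>]) (use hyp in \<open>auto simp: v_def\<close>)

lemma patch_ok: "i \<le> N \<Longrightarrow> 0 \<le> pl i" "i \<le> N \<Longrightarrow> pr i \<le> 1" "i \<le> N \<Longrightarrow> pl i < pr i"
  using patch_in01[OF N] patch_lt[OF N] by auto

lemma xi'_H1: assumes i: "i \<le> N" shows "\<exists>g. H1_on (pl i) (pr i) (xi' i) g"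
proof (cases "i \<in> TT")
  case False
  have "H1_on (pl i) (pr i) (\<lambda>x. 0 * x + 0) (\<lambda>x. 0)" by (rule H1_affine) (rule patch_ok(3)[OF i])
  then show ?thesis using False by (auto simp: xi'_def)
next
  case True
  then have "\<xi> i \<in> Vbar N \<phi> n i" using hyp by blast
  then obtain cc where cc: "\<forall>x\<in>{pl i..pr i}. \<xi> i x = (\<Sum>j\<in>{1..n i}. cc j * (\<phi> i j x - patch_interp N i (\<phi> i j) x))"
    unfolding Vbar_def by blast
  have "\<forall>j\<in>{1..n i}. \<exists>g. H1_on (pl i) (pr i) (\<lambda>x. cc j * (\<phi> i j x - patch_interp N i (\<phi> i j) x)) g"
  proof
    fix j assume j: "j \<in> {1..n i}"
    obtain g1 where g1: "H1_on (pl i) (pr i) (\<phi> i j) g1" using \<phi>H i j by auto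
    obtain g2 where g2: "H1_on (pl i) (pr i) (patch_interp N i (\<phi> i j)) g2"
      using interp_H1_patch[OF N i] by blast
    show "\<exists>g. H1_on (pl i) (pr i) (\<lambda>x. cc j * (\<phi> i j x - patch_interp N i (\<phi> i j) x)) g"
      using H1_cmult[OF H1_diff[OF g1 g2], of "cc j"] by blast
  qed
  then obtain G where G: "\<And>j. j \<in> {1..n i} \<Longrightarrow> H1_on (pl i) (pr i) (\<lambda>x. cc j * (\<phi> i j x - patch_interp N i (\<phi> i j) x)) (G j)"
    by metis
  have "H1_on (pl i) (pr i) (\<lambda>x. \<Sum>j\<in>{1..n i}. cc j * (\<phi> i j x - patch_interp N i (\<phi> i j) x)) (\<lambda>x. \<Sum>j\<in>{1..n i}. G j x)"
    by (rule H1_sum[OF _ patch_ok(3)[OF i]]) (use G in auto)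
  then have "H1_on (pl i) (pr i) (\<xi> i) (\<lambda>x. \<Sum>j\<in>{1..n i}. G j x)"
    by (rule H1_cong) (use cc in auto)
  then show ?thesis using True by (auto simp: xi'_def)
qed

lemma e_H1: assumes i: "i \<le> N" shows "\<exists>g. H1_on (pl i) (pr i) (e i) g"
proof -
  obtain gu where gu: "H1_on 0 1 u gu" using uH by blast
  have hu: "H1_on (pl i) (pr i) u gu" by (rule H1_restrict[OF gu]) (use patch_ok[OF i] in auto)
  obtain g2 where g2: "H1_on (pl i) (pr i) (patch_interp N i u) g2" using interp_H1_patch[OF N i] by blast
  obtain g3 where g3: "H1_on (pl i) (pr i) (xi' i) g3" using xi'_H1[OF i] by blast
  have "H1_on (pl i) (pr i) (\<lambda>x. u x - patch_interp N i u x - xi' i x) (\<lambda>x. gu x - g2 x - g3 x)"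
    by (rule H1_diff[OF H1_diff[OF hu g2] g3])
  then show ?thesis unfolding e_def[abs_def] by blast
qed

definition gg :: "nat \<Rightarrow> real \<Rightarrow> real" where
  "gg i = wderiv (pl i) (pr i) (e i)"

lemma gg_H1: "i \<le> N \<Longrightarrow> H1_on (pl i) (pr i) (e i) (gg i)"
  unfolding gg_def using e_H1 wderiv_H1 by blast

definition EE :: "nat \<Rightarrow> real" where
  "EE i = energy_norm a (pl i) (pr i) (e i)"

lemma EE_sq: "i \<le> N \<Longrightarrow> (EE i)^2 = integral {pl i..pr i} (\<lambda>x. a x * (gg i x)^2)"
  unfolding EE_def using energy_sq(1)[OF _ _ gg_H1] patch_ok by blast

lemma EE_nn: "i \<le> N \<Longrightarrow> 0 \<le> EE i"
  unfolding EE_def using energy_sq(2)[OF _ _ gg_H1] patch_ok by blast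

lemma decomp:
  assumes k: "1 \<le> k" "k \<le> N" and x: "x \<in> {node N (k - 1)..node N k}"
  shows "u x - v x = (- real N * x + real k) * e (k - 1) x + (real N * x + (1 - real k)) * e k x"
proof -
  define L where "L = u (node N (k - 1)) * hat N (k - 1) x + u (node N k) * hat N k x"
  have i1: "patch_interp N (k - 1) u x = L" unfolding L_def by (rule interp_elt[OF N x k]) auto
  have i2: "patch_interp N k u x = L" unfolding L_def by (rule interp_elt[OF N x k]) auto
  have s1: "(\<Sum>i\<in>{1..N}. u (node N i) * hat N i x) = L"
  proof -
    have "(\<Sum>i\<in>{0..N}. hat N i x * u (node N i)) = hat N 0 x * u (node N 0) + (\<Sum>i\<in>{Suc 0..N}. hat N i x * u (node N i))"
      by (rule sum.atLeast_Suc_atMost) simp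
    then have "(\<Sum>i\<in>{1..N}. u (node N i) * hat N i x) = (\<Sum>i\<in>{0..N}. hat N i x * u (node N i))"
      using u0 by (simp add: mult.commute)
    also have "\<dots> = hat N (k - 1) x * u (node N (k - 1)) + hat N k x * u (node N k)"
      by (rule sum_hat_elt[OF N x k(1)]) (use k in auto)
    finally show ?thesis unfolding L_def by (simp add: mult.commute)
  qed
  have s2: "(\<Sum>i\<in>TT. hat N i x * \<xi> i x) = hat N (k - 1) x * xi' (k - 1) x + hat N k x * xi' k x"
  proof -
    have "(\<Sum>i\<in>TT. hat N i x * \<xi> i x) = (\<Sum>i\<in>{0..N}. hat N i x * xi' i x)"
      by (rule sum.mono_neutral_cong_left) (use TT_sub in \<open>auto simp: xi'_def\<close>)
    also have "\<dots> = hat N (k - 1) x * xi' (k - 1) x + hat N k x * xi' k x"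
      by (rule sum_hat_elt[OF N x k(1)]) (use k in auto)
    finally show ?thesis .
  qed
  have h: "hat N (k - 1) x = - real N * x + real k" "hat N k x = real N * x + (1 - real k)"
    using hat_elt(1,2)[OF N x k(1)] by auto
  show ?thesis
  proof -
    have hs: "hat N (k - 1) x = 1 - hat N k x" using hat_sum1[OF N x k(1)] by simp
    show ?thesis
      unfolding v_def e_def s1 s2 i1 i2 h[symmetric] hs by (simp add: algebra_simps)
  qed
qed

definition D :: "nat \<Rightarrow> real \<Rightarrow> real" where
  "D k x = (- real N * e (k - 1) x + (- real N * x + real k) * gg (k - 1) x)
         + (real N * e k x + (real N * x + (1 - real k)) * gg k x)"

lemma D_H1:
  assumes k: "1 \<le> k" "k \<le> N"
  shows "H1_on (node N (k - 1)) (node N k) (\<lambda>x. u x - v x) (D k)"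
proof -
  have lt: "node N (k - 1) < node N k" by (rule elt_lt[OF N k(1)])
  have h1: "H1_on (node N (k - 1)) (node N k) (e (k - 1)) (gg (k - 1))"
    by (rule H1_restrict[OF gg_H1]) (use elt_in_patch[OF N k, of "k - 1"] lt k in auto)
  have h2: "H1_on (node N (k - 1)) (node N k) (e k) (gg k)"
    by (rule H1_restrict[OF gg_H1]) (use elt_in_patch[OF N k, of k] lt k in auto)
  have "H1_on (node N (k - 1)) (node N k)
          (\<lambda>x. (- real N * x + real k) * e (k - 1) x + (real N * x + (1 - real k)) * e k x) (D k)"
    unfolding D_def[abs_def] by (rule H1_add[OF H1_mult_affine[OF h1] H1_mult_affine[OF h2]])
  then show ?thesis by (rule H1_cong) (rule decomp[OF k])
qed

definition elt :: "real \<Rightarrow> nat" where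
  "elt x = (if x \<le> 0 then 1 else nat \<lceil>real N * x\<rceil>)"

definition G :: "real \<Rightarrow> real" where
  "G x = D (elt x) x"

lemma elt_eq:
  assumes k: "1 \<le> k" "k \<le> N" and x: "x \<in> {node N (k - 1)..node N k} - {node N (k - 1)}"
  shows "elt x = k"
proof -
  have Np: "real N > 0" using N by simp
  have x1: "node N (k - 1) < x" "x \<le> node N k" using x by auto
  have "0 \<le> node N (k - 1)" using node_mono[OF N, of 0 "k - 1"] by simp
  then have xp: "x > 0" using x1 by simp
  have "real (k - 1) / real N < x" "x \<le> real k / real N" using x1 by (auto simp: node_def)
  then have "real (k - 1) < real N * x" "real N * x \<le> real k" using Np by (auto simp: field_simps)
  then have "real k - 1 < real N * x" "real N * x \<le> real k" using k by (auto simp: of_nat_diff)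
  then have "\<lceil>real N * x\<rceil> = int k" by (intro ceiling_unique) auto
  then show ?thesis using xp by (simp add: elt_def)
qed

lemma G_H1_elt:
  assumes k: "1 \<le> k" "k \<le> N"
  shows "H1_on (node N (k - 1)) (node N k) (\<lambda>x. u x - v x) G"
  by (rule H1_spike[OF D_H1[OF k], of "{node N (k - 1)}"]) (auto simp: G_def elt_eq[OF k])

lemma G_H1_upto: "1 \<le> m \<Longrightarrow> m \<le> N \<Longrightarrow> H1_on 0 (node N m) (\<lambda>x. u x - v x) G"
proof (induction m rule: nat_induct_at_least)
  case base
  then show ?case using G_H1_elt[of 1] by simp
next
  case (Suc m)
  have "H1_on 0 (node N m) (\<lambda>x. u x - v x) G" using Suc by simp
  moreover have "H1_on (node N m) (node N (Suc m)) (\<lambda>x. u x - v x) G"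
    using G_H1_elt[of "Suc m"] Suc by simp
  ultimately show ?case by (rule H1_glue)
qed

lemma G_H1: "H1_on 0 1 (\<lambda>x. u x - v x) G"
  using G_H1_upto[of N] N by simp

end

context mesh
begin

abbreviation "lft k \<equiv> node N (k - 1)"
abbreviation "rgt k \<equiv> node N k"

lemma elt_01: "1 \<le> k \<Longrightarrow> k \<le> N \<Longrightarrow> 0 \<le> lft k \<and> rgt k \<le> 1"
  using node_mono[OF N, of 0 "k - 1"] node_mono[OF N, of k N] N by auto

lemma e_H1_elt:
  assumes k: "1 \<le> k" "k \<le> N" and j: "j = k - 1 \<or> j = k"
  shows "H1_on (lft k) (rgt k) (e j) (gg j)"
proof -
  have lt: "lft k < rgt k" by (rule elt_lt[OF N k(1)])
  have jN: "j \<le> N" using j k by auto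
  show ?thesis
    by (rule H1_restrict[OF gg_H1[OF jN]]) (use elt_in_patch[OF N k j] lt in auto)
qed

definition Q :: "nat \<Rightarrow> nat \<Rightarrow> real" where
  "Q j k = \<beta> * (real N)^2 * integral {lft k..rgt k} (\<lambda>x. (e j x)^2)
         + integral {lft k..rgt k} (\<lambda>x. a x * (gg j x)^2)"

lemma elem_bound:
  assumes k: "1 \<le> k" "k \<le> N"
  shows "integral {lft k..rgt k} (\<lambda>x. a x * (D k x)^2) \<le> 4 * (Q (k - 1) k + Q k k)"
proof -
  have h1: "H1_on (lft k) (rgt k) (e (k - 1)) (gg (k - 1))" by (rule e_H1_elt[OF k]) simp
  have h2: "H1_on (lft k) (rgt k) (e k) (gg k)" by (rule e_H1_elt[OF k]) simp
  have cd: "0 \<le> lft k" "rgt k \<le> 1" using elt_01[OF k] by auto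
  have ie1: "(\<lambda>x. (e (k - 1) x)^2) integrable_on {lft k..rgt k}"
    by (rule integrable_continuous_interval) (intro continuous_intros H1_cont[OF h1])
  have ie2: "(\<lambda>x. (e k x)^2) integrable_on {lft k..rgt k}"
    by (rule integrable_continuous_interval) (intro continuous_intros H1_cont[OF h2])
  have ig1: "(\<lambda>x. a x * (gg (k - 1) x)^2) integrable_on {lft k..rgt k}" by (rule aint[OF cd H1_L2[OF h1]])
  have ig2: "(\<lambda>x. a x * (gg k x)^2) integrable_on {lft k..rgt k}" by (rule aint[OF cd H1_L2[OF h2]])
  have iD: "(\<lambda>x. a x * (D k x)^2) integrable_on {lft k..rgt k}" by (rule aint[OF cd H1_L2[OF D_H1[OF k]]])
  define b where "b = \<beta> * (real N)^2"
  have hasI: "((\<lambda>x. 4 * ((b * (e (k - 1) x)^2 + a x * (gg (k - 1) x)^2) + (b * (e k x)^2 + a x * (gg k x)^2)))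
      has_integral 4 * (Q (k - 1) k + Q k k)) {lft k..rgt k}"
    unfolding Q_def b_def[symmetric]
    by (intro has_integral_mult_right has_integral_add integrable_integral ie1 ie2 ig1 ig2)
  have "integral {lft k..rgt k} (\<lambda>x. a x * (D k x)^2)
       \<le> integral {lft k..rgt k} (\<lambda>x. 4 * ((b * (e (k - 1) x)^2 + a x * (gg (k - 1) x)^2) + (b * (e k x)^2 + a x * (gg k x)^2)))"
  proof (rule int_mono_open[OF iD has_integral_integrable[OF hasI]])
    fix x assume x: "x \<in> {lft k<..<rgt k}"
    then have x01: "x \<in> {0<..<1}" using cd by auto
    have a0: "0 \<le> a x" "a x \<le> \<beta>" using ab[OF x01] \<alpha> by auto
    have xc: "x \<in> {lft k..rgt k}" using x by auto
    define h1 where "h1 = - real N * x + real k"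
    define h2 where "h2 = real N * x + (1 - real k)"
    have hh: "0 \<le> h1" "h1 \<le> 1" "0 \<le> h2" "h2 \<le> 1"
      using hat_elt(1,2)[OF N xc k(1)] hat_ge0[of N k x] hat_le1[of N k x] hat_ge0[of N "k - 1" x] hat_le1[of N "k - 1" x]
      unfolding h1_def h2_def by auto
    have h1s: "h1^2 \<le> 1" using hh by (simp add: power_le_one)
    have h2s: "h2^2 \<le> 1" using hh by (simp add: power_le_one)
    define t1 where "t1 = - real N * e (k - 1) x"
    define t2 where "t2 = h1 * gg (k - 1) x"
    define t3 where "t3 = real N * e k x"
    define t4 where "t4 = h2 * gg k x"
    have Dx: "D k x = t1 + t2 + t3 + t4" unfolding D_def t1_def t2_def t3_def t4_def h1_def h2_def by simp
    have "a x * (D k x)^2 \<le> a x * (4 * (t1^2 + t2^2 + t3^2 + t4^2))"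
      unfolding Dx using a0 sq4 by (intro mult_left_mono) auto
    also have "\<dots> = 4 * (a x * t1^2 + a x * t2^2 + a x * t3^2 + a x * t4^2)" by (simp add: algebra_simps)
    also have "\<dots> \<le> 4 * ((b * (e (k - 1) x)^2 + a x * (gg (k - 1) x)^2) + (b * (e k x)^2 + a x * (gg k x)^2))"
    proof -
      have 1: "a x * t1^2 \<le> b * (e (k - 1) x)^2"
        unfolding t1_def b_def using a0 by (simp add: power_mult_distrib mult_right_mono algebra_simps)
      have 3: "a x * t3^2 \<le> b * (e k x)^2"
        unfolding t3_def b_def using a0 by (simp add: power_mult_distrib mult_right_mono algebra_simps)
      have 2: "a x * t2^2 \<le> a x * (gg (k - 1) x)^2"
        unfolding t2_def power_mult_distrib using a0 h1s
        by (intro mult_left_mono) (auto intro: mult_left_le_one_le simp: mult.commute)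
      have 4: "a x * t4^2 \<le> a x * (gg k x)^2"
        unfolding t4_def power_mult_distrib using a0 h2s
        by (intro mult_left_mono) (auto intro: mult_left_le_one_le simp: mult.commute)
      show ?thesis using 1 2 3 4 by simp
    qed
    finally show "a x * (D k x)^2 \<le> 4 * ((b * (e (k - 1) x)^2 + a x * (gg (k - 1) x)^2) + (b * (e k x)^2 + a x * (gg k x)^2))" .
  qed
  also have "\<dots> = 4 * (Q (k - 1) k + Q k k)" by (rule integral_unique[OF hasI])
  finally show ?thesis .
qed

lemma int_upto:
  fixes f :: "real \<Rightarrow> real"
  assumes f: "f integrable_on {0..1}"
  shows "m \<le> N \<Longrightarrow> integral {0..node N m} f = (\<Sum>k\<in>{1..m}. integral {lft k..rgt k} f)"
proof (induction m)
  case 0 then show ?case by simp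
next
  case (Suc m)
  have fi: "f integrable_on {0..node N (Suc m)}"
    by (rule integrable_subinterval_real[OF f]) (use node_mono[OF N, of "Suc m" N] N Suc.prems in auto)
  have "integral {0..node N (Suc m)} f = integral {0..node N m} f + integral {node N m..node N (Suc m)} f"
    using hk_combine[of 0 "node N m" "node N (Suc m)" f] fi node_mono[OF N, of 0 m] node_mono[OF N, of m "Suc m"]
    by simp
  then show ?case using Suc by simp
qed

lemma total_int:
  "integral {0..1} (\<lambda>x. a x * (G x)^2) = (\<Sum>k\<in>{1..N}. integral {lft k..rgt k} (\<lambda>x. a x * (D k x)^2))"
proof -
  have f: "(\<lambda>x. a x * (G x)^2) integrable_on {0..1}" by (rule aint[OF _ _ H1_L2[OF G_H1]]) auto
  have "integral {0..1} (\<lambda>x. a x * (G x)^2) = (\<Sum>k\<in>{1..N}. integral {lft k..rgt k} (\<lambda>x. a x * (G x)^2))"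
    using int_upto[OF f, of N] N by simp
  also have "\<dots> = (\<Sum>k\<in>{1..N}. integral {lft k..rgt k} (\<lambda>x. a x * (D k x)^2))"
  proof (rule sum.cong[OF refl])
    fix k assume k: "k \<in> {1..N}"
    show "integral {lft k..rgt k} (\<lambda>x. a x * (G x)^2) = integral {lft k..rgt k} (\<lambda>x. a x * (D k x)^2)"
      by (rule integral_spike[of "{lft k}"]) (use k elt_eq in \<open>auto simp: G_def\<close>)
  qed
  finally show ?thesis .
qed

definition P :: "nat \<Rightarrow> real" where
  "P j = \<beta> * (real N)^2 * integral {pl j..pr j} (\<lambda>x. (e j x)^2) + integral {pl j..pr j} (\<lambda>x. a x * (gg j x)^2)"

lemma P_split:
  assumes j: "j \<le> N"
  shows "P j = (if 1 \<le> j then Q j j else 0) + (if j + 1 \<le> N then Q j (j + 1) else 0)"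
proof -
  have H: "H1_on (pl j) (pr j) (e j) (gg j)" by (rule gg_H1[OF j])
  have i1: "(\<lambda>x. (e j x)^2) integrable_on {pl j..pr j}"
    by (rule integrable_continuous_interval) (intro continuous_intros H1_cont[OF H])
  have i2: "(\<lambda>x. a x * (gg j x)^2) integrable_on {pl j..pr j}"
    by (rule aint[OF _ _ H1_L2[OF H]]) (use patch_ok[OF j] in auto)
  show ?thesis
    unfolding P_def Q_def patch_integral[OF N j i1] patch_integral[OF N j i2]
    by (auto simp: algebra_simps)
qed

lemma sum_reindex:
  "(\<Sum>k\<in>{1..N}. (Q (k - 1) k + Q k k)) = (\<Sum>j\<in>{0..N}. P j)"
proof -
  have A: "(\<Sum>j\<in>{0..N}. (if 1 \<le> j then Q j j else 0)) = (\<Sum>k\<in>{1..N}. Q k k)"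
  proof -
    have "(\<Sum>j\<in>{0..N}. (if 1 \<le> j then Q j j else 0)) = (\<Sum>j\<in>{j \<in> {0..N}. 1 \<le> j}. Q j j)"
      by (rule sum.inter_filter[symmetric]) simp
    also have "{j \<in> {0..N}. 1 \<le> j} = {1..N}" by auto
    finally show ?thesis .
  qed
  have B: "(\<Sum>j\<in>{0..N}. (if j + 1 \<le> N then Q j (j + 1) else 0)) = (\<Sum>k\<in>{1..N}. Q (k - 1) k)"
  proof -
    have "(\<Sum>j\<in>{0..N}. (if j + 1 \<le> N then Q j (j + 1) else 0)) = (\<Sum>j\<in>{j \<in> {0..N}. j + 1 \<le> N}. Q j (j + 1))"
      by (rule sum.inter_filter[symmetric]) simp
    also have "{j \<in> {0..N}. j + 1 \<le> N} = {0..N - 1}" using N by auto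
    also have "(\<Sum>j\<in>{0..N - 1}. Q j (j + 1)) = (\<Sum>k\<in>{0 + 1..N - 1 + 1}. Q (k - 1) k)"
      using sum.shift_bounds_cl_nat_ivl[of "\<lambda>k. Q (k - 1) k" 0 1 "N - 1"] by simp
    also have "{0 + 1..N - 1 + 1} = {1..N}" using N by auto
    finally show ?thesis .
  qed
  have "(\<Sum>j\<in>{0..N}. P j) = (\<Sum>j\<in>{0..N}. (if 1 \<le> j then Q j j else 0) + (if j + 1 \<le> N then Q j (j + 1) else 0))"
    by (rule sum.cong[OF refl]) (simp add: P_split)
  also have "\<dots> = (\<Sum>k\<in>{1..N}. Q k k) + (\<Sum>k\<in>{1..N}. Q (k - 1) k)"
    unfolding sum.distrib A B ..
  finally show ?thesis by (simp add: sum.distrib)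
qed

end

context mesh
begin

lemma e_left0:
  assumes j: "j \<le> N" and nT: "j \<notin> TT"
  shows "e j (pl j) = 0"
proof -
  define k where "k = max 1 j"
  have k: "1 \<le> k" "k \<le> N" using j N by (auto simp: k_def)
  have jk: "j = k - 1 \<or> j = k" by (auto simp: k_def)
  have plk: "pl j = node N (k - 1)" by (auto simp: k_def patch_l_eq max_def)
  have Np: "real N > 0" using N by simp
  have nd: "real N * node N (k - 1) = real k - 1" using Np k by (simp add: node_def of_nat_diff)
  have x: "pl j \<in> {node N (k - 1)..node N k}" unfolding plk using node_mono[OF N, of "k - 1" k] by auto
  have "patch_interp N j u (pl j) = u (node N (k - 1)) * hat N (k - 1) (pl j) + u (node N k) * hat N k (pl j)"
    by (rule interp_elt[OF N x k jk])
  also have "hat N k (pl j) = 0" using hat_elt(1)[OF N x k(1)] unfolding plk nd by simp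
  also have "hat N (k - 1) (pl j) = 1" using hat_elt(2)[OF N x k(1)] unfolding plk nd by simp
  finally have "patch_interp N j u (pl j) = u (pl j)" unfolding plk by simp
  then show ?thesis using nT by (simp add: e_def xi'_def)
qed

lemma P_bound:
  assumes j: "j \<le> N"
  shows "P j \<le> (1 + 4 * \<beta> * C\<^sub>1^2 + 4 * \<beta> / \<alpha>) * (EE j)^2"
proof -
  have H: "H1_on (pl j) (pr j) (e j) (gg j)" by (rule gg_H1[OF j])
  have pc: "0 \<le> pl j" "pr j \<le> 1" "pl j < pr j" using patch_ok[OF j] by auto
  have diam: "pr j - pl j \<le> 2 / real N" by (rule patch_diam[OF N j])
  have Np: "real N > 0" using N by simp
  have dsq: "(pr j - pl j)^2 \<le> 4 / (real N)^2"
  proof -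
    have "(pr j - pl j)^2 \<le> (2 / real N)^2" by (rule power_mono[OF diam]) (use pc in auto)
    then show ?thesis by (simp add: power_divide)
  qed
  have I2: "integral {pl j..pr j} (\<lambda>x. a x * (gg j x)^2) = (EE j)^2" using EE_sq[OF j] by simp
  have EEnn: "0 \<le> EE j" by (rule EE_nn[OF j])
  have ie: "(\<lambda>x. (e j x)^2) integrable_on {pl j..pr j}"
    by (rule integrable_continuous_interval) (intro continuous_intros H1_cont[OF H])
  define Ie where "Ie = integral {pl j..pr j} (\<lambda>x. (e j x)^2)"
  have Ienn: "0 \<le> Ie" unfolding Ie_def by (rule integral_nonneg[OF ie]) simp
  have b0: "0 \<le> \<beta> * (real N)^2" using \<alpha> \<alpha>\<beta> by simp
  have key: "\<beta> * (real N)^2 * Ie \<le> (4 * \<beta> * C\<^sub>1^2 + 4 * \<beta> / \<alpha>) * (EE j)^2"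
  proof (cases "j \<in> TT")
    case True
    have L: "L2_norm (pl j) (pr j) (e j) \<le> C\<^sub>1 * (pr j - pl j) * EE j"
      using hyp True unfolding EE_def e_T2[OF True] by blast
    have Ls: "L2_norm (pl j) (pr j) (e j) = sqrt Ie" unfolding L2_norm_def Ie_def ..
    have "Ie = (sqrt Ie)^2" using Ienn by simp
    also have "\<dots> \<le> (C\<^sub>1 * (pr j - pl j) * EE j)^2"
      by (rule power_mono) (use L Ls Ienn in auto)
    also have "\<dots> = C\<^sub>1^2 * (pr j - pl j)^2 * (EE j)^2" by (simp add: power_mult_distrib)
    also have "\<dots> \<le> C\<^sub>1^2 * (4 / (real N)^2) * (EE j)^2"
      by (intro mult_right_mono mult_left_mono dsq) auto
    finally have "Ie \<le> C\<^sub>1^2 * (4 / (real N)^2) * (EE j)^2" .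
    then have "\<beta> * (real N)^2 * Ie \<le> \<beta> * (real N)^2 * (C\<^sub>1^2 * (4 / (real N)^2) * (EE j)^2)"
      by (rule mult_left_mono[OF _ b0])
    also have "\<dots> = 4 * \<beta> * C\<^sub>1^2 * (EE j)^2" using Np by (simp add: field_simps)
    also have "\<dots> \<le> (4 * \<beta> * C\<^sub>1^2 + 4 * \<beta> / \<alpha>) * (EE j)^2"
      using \<alpha> \<alpha>\<beta> by (simp add: distrib_right)
    finally show ?thesis .
  next
    case False
    have e0: "e j (pl j) = 0" by (rule e_left0[OF j False])
    have "Ie \<le> (pr j - pl j)^2 * integral {pl j..pr j} (\<lambda>x. (gg j x)^2)"
      unfolding Ie_def by (rule poincare[OF H e0])
    also have "\<dots> \<le> (4 / (real N)^2) * ((EE j)^2 / \<alpha>)"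
    proof (rule mult_mono[OF dsq])
      show "integral {pl j..pr j} (\<lambda>x. (gg j x)^2) \<le> (EE j)^2 / \<alpha>"
        using L2_le_energy[OF pc(1,2) H1_L2[OF H]] I2 by simp
      show "0 \<le> 4 / (real N)^2" by simp
      have "(\<lambda>x. (gg j x)^2) integrable_on {pl j..pr j}" using H1_L2[OF H] by (simp add: L2on_def)
      then show "0 \<le> integral {pl j..pr j} (\<lambda>x. (gg j x)^2)" by (rule integral_nonneg) simp
    qed
    finally have "Ie \<le> (4 / (real N)^2) * ((EE j)^2 / \<alpha>)" .
    then have "\<beta> * (real N)^2 * Ie \<le> \<beta> * (real N)^2 * ((4 / (real N)^2) * ((EE j)^2 / \<alpha>))"
      by (rule mult_left_mono[OF _ b0])
    also have "\<dots> = 4 * \<beta> / \<alpha> * (EE j)^2" using Np \<alpha> by (simp add: field_simps)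
    also have "\<dots> \<le> (4 * \<beta> * C\<^sub>1^2 + 4 * \<beta> / \<alpha>) * (EE j)^2"
      using \<alpha> \<alpha>\<beta> by (simp add: distrib_right)
    finally show ?thesis .
  qed
  have "P j = \<beta> * (real N)^2 * Ie + (EE j)^2" unfolding P_def Ie_def I2 ..
  also have "\<dots> \<le> (4 * \<beta> * C\<^sub>1^2 + 4 * \<beta> / \<alpha>) * (EE j)^2 + (EE j)^2" using key by simp
  also have "\<dots> = (1 + 4 * \<beta> * C\<^sub>1^2 + 4 * \<beta> / \<alpha>) * (EE j)^2" by (simp add: algebra_simps)
  finally show ?thesis .
qed

lemma final:
  "energy_norm a 0 1 (\<lambda>x. u x - v x)
     \<le> (2 * sqrt (1 + 4 * \<beta> * C\<^sub>1^2 + 4 * \<beta> / \<alpha>)) *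
       sqrt ((\<Sum>i\<in>{0..N} - TT. (energy_norm a (pl i) (pr i) (\<lambda>x. u x - patch_interp N i u x))^2)
             + (\<Sum>i\<in>TT. (\<epsilon> i)^2))"
proof -
  define K0 where "K0 = 1 + 4 * \<beta> * C\<^sub>1^2 + 4 * \<beta> / \<alpha>"
  define S where "S = (\<Sum>i\<in>{0..N} - TT. (energy_norm a (pl i) (pr i) (\<lambda>x. u x - patch_interp N i u x))^2)
             + (\<Sum>i\<in>TT. (\<epsilon> i)^2)"
  have K0: "0 \<le> K0" unfolding K0_def using \<alpha> \<alpha>\<beta> by simp
  have "integral {0..1} (\<lambda>x. a x * (G x)^2) = (\<Sum>k\<in>{1..N}. integral {lft k..rgt k} (\<lambda>x. a x * (D k x)^2))"
    by (rule total_int)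
  also have "\<dots> \<le> (\<Sum>k\<in>{1..N}. 4 * (Q (k - 1) k + Q k k))"
    by (rule sum_mono) (rule elem_bound, auto)
  also have "\<dots> = 4 * (\<Sum>j\<in>{0..N}. P j)" by (subst sum_reindex[symmetric]) (simp add: sum_distrib_left)
  also have "\<dots> \<le> 4 * (\<Sum>j\<in>{0..N}. K0 * (EE j)^2)"
    unfolding K0_def by (intro mult_left_mono sum_mono P_bound) auto
  also have "(\<Sum>j\<in>{0..N}. K0 * (EE j)^2) = K0 * (\<Sum>j\<in>{0..N}. (EE j)^2)" by (simp add: sum_distrib_left)
  also have "(\<Sum>j\<in>{0..N}. (EE j)^2) = (\<Sum>j\<in>{0..N} - TT. (EE j)^2) + (\<Sum>j\<in>TT. (EE j)^2)"
    by (rule sum.subset_diff[OF TT_sub]) simp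
  also have "(\<Sum>j\<in>{0..N} - TT. (EE j)^2) = (\<Sum>i\<in>{0..N} - TT. (energy_norm a (pl i) (pr i) (\<lambda>x. u x - patch_interp N i u x))^2)"
    by (rule sum.cong[OF refl]) (simp add: EE_def e_nT2)
  also have "(\<Sum>j\<in>TT. (EE j)^2) \<le> (\<Sum>i\<in>TT. (\<epsilon> i)^2)"
  proof (rule sum_mono)
    fix i assume i: "i \<in> TT"
    have iN: "i \<le> N" using i TT_sub by auto
    have "EE i \<le> \<epsilon> i" using hyp i unfolding EE_def e_T2[OF i] by blast
    then show "(EE i)^2 \<le> (\<epsilon> i)^2" by (rule power_mono) (rule EE_nn[OF iN])
  qed
  finally have I: "integral {0..1} (\<lambda>x. a x * (G x)^2) \<le> 4 * (K0 * S)"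
    unfolding S_def using K0 by (simp add: mult_left_mono)
  have "energy_norm a 0 1 (\<lambda>x. u x - v x) = sqrt (integral {0..1} (\<lambda>x. a x * (G x)^2))"
    by (rule energy_norm_eq[OF G_H1])
  also have "\<dots> \<le> sqrt (4 * (K0 * S))" using I by simp
  also have "\<dots> = sqrt 4 * (sqrt K0 * sqrt S)" by (simp add: real_sqrt_mult)
  also have "sqrt 4 = (2::real)" by (rule real_sqrt_unique) auto
  finally show ?thesis unfolding K0_def S_def by (simp add: mult.assoc)
qed

end

theorem mainTheorem1:
  fixes \<alpha> \<beta> C\<^sub>1 :: real
  assumes "0 < \<alpha>" and "\<alpha> \<le> \<beta>" and "0 < C\<^sub>1"
  shows "\<exists>C::real. \<forall>(N::nat) (a::real \<Rightarrow> real) (u::real \<Rightarrow> real) (n::nat \<Rightarrow> nat)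
           (\<phi>::nat \<Rightarrow> nat \<Rightarrow> real \<Rightarrow> real) (\<xi>::nat \<Rightarrow> real \<Rightarrow> real) (\<epsilon>::nat \<Rightarrow> real).
    1 \<le> N \<and>
    a measurable_on {0..1} \<and> (\<forall>x\<in>{0<..<1}. \<alpha> \<le> a x \<and> a x \<le> \<beta>) \<and>
    (\<exists>g. H1_on 0 1 u g) \<and> u 0 = 0 \<and>
    (\<forall>i\<le>N. \<forall>j\<le>n i. \<exists>g. H1_on (patch_l N i) (patch_r N i) (\<phi> i j) g) \<and>
    (\<forall>i\<in>T2 N \<phi> n.
       \<xi> i \<in> Vbar N \<phi> n i \<and> 0 \<le> \<epsilon> i \<and>
       L2_norm (patch_l N i) (patch_r N i) (\<lambda>x. u x - patch_interp N i u x - \<xi> i x)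
         \<le> C\<^sub>1 * (patch_r N i - patch_l N i) *
           energy_norm a (patch_l N i) (patch_r N i) (\<lambda>x. u x - patch_interp N i u x - \<xi> i x) \<and>
       energy_norm a (patch_l N i) (patch_r N i) (\<lambda>x. u x - patch_interp N i u x - \<xi> i x) \<le> \<epsilon> i)
    \<longrightarrow> (\<exists>v. in_S N \<phi> n v \<and> (\<exists>g. H1_on 0 1 (\<lambda>x. u x - v x) g) \<and>
          energy_norm a 0 1 (\<lambda>x. u x - v x)
            \<le> C * sqrt ((\<Sum>i\<in>{0..N} - T2 N \<phi> n.
                           (energy_norm a (patch_l N i) (patch_r N i) (\<lambda>x. u x - patch_interp N i u x))^2)
                        + (\<Sum>i\<in>T2 N \<phi> n. (\<epsilon> i)^2)))"
proof (rule exI[of _ "2 * sqrt (1 + 4 * \<beta> * C\<^sub>1^2 + 4 * \<beta> / \<alpha>)"], intro allI impI, elim conjE)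
  fix N a u n \<phi> \<xi> \<epsilon>
  assume h: "1 \<le> N" "a measurable_on {0..1}" "\<forall>x\<in>{0<..<1}. \<alpha> \<le> a x \<and> a x \<le> \<beta>"
    "\<exists>g. H1_on 0 1 u g" "u 0 = 0" "\<forall>i\<le>N. \<forall>j\<le>n i. \<exists>g. H1_on (patch_l N i) (patch_r N i) (\<phi> i j) g"
    "\<forall>i\<in>T2 N \<phi> n.
       \<xi> i \<in> Vbar N \<phi> n i \<and> 0 \<le> \<epsilon> i \<and>
       L2_norm (patch_l N i) (patch_r N i) (\<lambda>x. u x - patch_interp N i u x - \<xi> i x)
         \<le> C\<^sub>1 * (patch_r N i - patch_l N i) *
           energy_norm a (patch_l N i) (patch_r N i) (\<lambda>x. u x - patch_interp N i u x - \<xi> i x) \<and>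
       energy_norm a (patch_l N i) (patch_r N i) (\<lambda>x. u x - patch_interp N i u x - \<xi> i x) \<le> \<epsilon> i"
  have am: "a \<in> borel_measurable (lebesgue_on {0..1})"
    using h(2) measurable_on_iff_borel_measurable[of "{0..1::real}" a] by simp
  interpret mesh a \<alpha> \<beta> N u n \<phi> \<xi> \<epsilon> C\<^sub>1
    by unfold_locales (use h assms am in auto)
  show "\<exists>v. in_S N \<phi> n v \<and> (\<exists>g. H1_on 0 1 (\<lambda>x. u x - v x) g) \<and>
          energy_norm a 0 1 (\<lambda>x. u x - v x)
            \<le> 2 * sqrt (1 + 4 * \<beta> * C\<^sub>1^2 + 4 * \<beta> / \<alpha>) * sqrt ((\<Sum>i\<in>{0..N} - T2 N \<phi> n.
                           (energy_norm a (patch_l N i) (patch_r N i) (\<lambda>x. u x - patch_interp N i u x))^2)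
                        + (\<Sum>i\<in>T2 N \<phi> n. (\<epsilon> i)^2))"
    using in_S_v G_H1 final by blast
qed

end
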